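(* Let $N\ge1$, $d_1,d_2,d_3,d_4\ge1$, $\kappa_1,\kappa_2\ge0$, and for $1\le j\le N$ let $B_j\in\mathbb C^{d_1\times d_2\times d_1\times d_2}$, $C_j\in\mathbb C^{d_3\times d_4\times d_3\times d_4}$ satisfy $[B_j]_{\alpha_1\beta_1\alpha_2\beta_2}=-\overline{[B_j]_{\alpha_2\beta_2\alpha_1\beta_1}}$ and $[C_j]_{\gamma_1\delta_1\gamma_2\delta_2}=-\overline{[C_j]_{\gamma_2\delta_2\gamma_1\delta_1}}$. Define $A_j\in\mathbb C^{d_1\times d_2\times d_3\times d_4\times d_1\times d_2\times d_3\times d_4}$ by $$[A_j]_{\alpha_1\beta_1\gamma_1\delta_1\alpha_2\beta_2\gamma_2\delta_2}=[B_j]_{\alpha_1\beta_1\alpha_2\beta_2}\delta_{\gamma_1\gamma_2}\delta_{\delta_1\delta_2}+[C_j]_{\gamma_1\delta_1\gamma_2\delta_2}\delta_{\alpha_1\alpha_2}\delta_{\beta_1\beta_2},$$ and take in the Lohe tensor model (rank $4$) the couplings $\kappa_{(0,1,1,1)}=\kappa_{(1,1,0,1)}=\kappa_1$, $\kappa_{(1,0,1,1)}=\kappa_{(1,1,1,0)}=\kappa_2$, and $\kappa_{i_*}=0$ for all other $i_*\in\{0,1\}^4$. Then: (1) If $\{(U_i,V_i)\}$ is a solution of the double matrix model (with these $B_j,C_j,\kappa_1,\kappa_2$), then $T_i(t):=U_i(t)\otimes V_i(t)$ is a (quadratically separable) solution of the Lohe tensor model with free flow tensors $A_i$. (2) If $\{T_i\}$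 is a solution of the Lohe tensor model with free flow tensors $A_i$ and initial data $T_i(0)=U_i^0\otimes V_i^0$, where $U_i^0\in\mathbb C^{d_1\times d_2}$, $V_i^0\in\mathbb C^{d_3\times d_4}$ have $\|U_i^0\|_F=\|V_i^0\|_F=1$, then there exist matrices $U_i(t)\in\mathbb C^{d_1\times d_2}$, $V_i(t)\in\mathbb C^{d_3\times d_4}$ of unit Frobenius norm with $T_i(t)=U_i(t)\otimes V_i(t)$ for all $t>0$, where $\{(U_i,V_i)\}$ is the solution of the double matrix model with $(U_i,V_i)(0)=(U_i^0,V_i^0)$.
   Context: $\langle A,B\rangle_F=\mathrm{tr}(A^\dagger B)$, $\|A\|_F=\sqrt{\langle A,A\rangle_F}$; $(U\otimes V)$ is the rank-4 tensor with $[U\otimes V]_{\alpha\beta\gamma\delta}=[U]_{\alpha\beta}[V]_{\gamma\delta}$. Repeated indices are summed. Double matrix model: for $U_j\in\mathbb C^{d_1\times d_2}$, $V_j\in\mathbb C^{d_3\times d_4}$, $\dot U_j=B_jU_j+\frac{\kappa_1}{N}\sum_k(\langle V_j,V_k\rangle_FU_kU_j^\dagger U_j-\langle V_k,V_j\rangle_FU_jU_k^\dagger U_j)+\frac{\kappa_2}{N}\sum_k(\langle V_j,V_k\rangle_FU_jU_j^\dagger U_k-\langle V_k,V_j\rangle_FU_jU_k^\dagger U_j)$, $\dot V_j=C_jV_j+\frac{\kappa_1}{N}\sum_k(\langle U_j,U_k\rangle_FV_kV_j^\dagger V_j-\langle U_k,U_j\rangle_FV_jV_k^\dagger V_j)+\frac{\kappa_2}{N}\sum_k(\langle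 U_j,U_k\rangle_FV_jV_j^\dagger V_k-\langle U_k,U_j\rangle_FV_jV_k^\dagger V_j)$, where $[B_jU_j]_{\alpha\beta}=[B_j]_{\alpha\beta\gamma\delta}[U_j]_{\gamma\delta}$, $[C_jV_j]_{\alpha\beta}=[C_j]_{\alpha\beta\gamma\delta}[V_j]_{\gamma\delta}$. Lohe tensor model for rank-$r$ tensors $T_j\in\mathbb C^{e_1\times\cdots\times e_r}$: for $i_*=(i_1,\dots,i_r)\in\{0,1\}^r$ write $\alpha_{*i_*}=(\alpha_{1i_1},\dots,\alpha_{ri_r})$, $\alpha_{*(1-i_* )}=(\alpha_{1(1-i_1)},\dots,\alpha_{r(1-i_r)})$, $\alpha_{*0},\alpha_{*1}$ similarly; with $T_c=\frac1N\sum_kT_k$, nonnegative couplings $\kappa_{i_*}$, and rank-$2r$ tensors $A_j$ with $\overline{[A_j]_{\alpha_{*0}\alpha_{*1}}}=-[A_j]_{\alpha_{*1}\alpha_{*0}}$, $\frac{d}{dt}[T_j]_{\alpha_{*0}}=[A_j]_{\alpha_{*0}\alpha_{*1}}[T_j]_{\alpha_{*1}}+\sum_{i_*\in\{0,1\}^r}\kappa_{i_*}\big([T_c]_{\alpha_{*i_*}}\overline{[T_j]_{\alpha_{*1}}}[T_j]_{\alpha_{*(1-i_* )}}-[T_j]_{\alpha_{*i_*}}\overline{[T_c]_{\alpha_{*1}}}[T_j]_{\alpha_{*(1-i_* )}}\big)$, summing over the indices $\alpha_{*1}$. A quadratically separable state is a solution of the form $T_i=U_i^1\otimes\cdots\otimes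 U_i^m$ with matrices $U_i^k$ of unit Frobenius norm. *)

theory Defs
  imports "HOL-Analysis.Analysis"
begin

text \<open>Matrices in C^(d1 x d2) are functions on finite index types; the
dimensions d_k are the cardinalities of the index types (hence >= 1).
The ensemble of N particles is indexed by a finite type 'n, N = CARD('n).\<close>

type_synonym ('a, 'b) cmat = "'a \<Rightarrow> 'b \<Rightarrow> complex"

definition frob :: "('a::finite, 'b::finite) cmat \<Rightarrow> ('a, 'b) cmat \<Rightarrow> complex" where
  "frob A B = (\<Sum>\<alpha>\<in>UNIV. \<Sum>\<beta>\<in>UNIV. cnj (A \<alpha> \<beta>) * B \<alpha> \<beta>)"

definition frob_norm :: "('a::finite, 'b::finite) cmat \<Rightarrow> real" where
  "frob_norm A = sqrt (Re (frob A A))"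

definition mmul :: "('a, 'b::finite) cmat \<Rightarrow> ('b, 'c) cmat \<Rightarrow> ('a, 'c) cmat" where
  "mmul A B = (\<lambda>i k. \<Sum>j\<in>UNIV. A i j * B j k)"

definition adj :: "('a, 'b) cmat \<Rightarrow> ('b, 'a) cmat" where
  "adj A = (\<lambda>i j. cnj (A j i))"

definition dmm_rhs ::
  "real \<Rightarrow> real \<Rightarrow> ('n::finite \<Rightarrow> 'a::finite \<Rightarrow> 'b::finite \<Rightarrow> 'a \<Rightarrow> 'b \<Rightarrow> complex)
   \<Rightarrow> ('n \<Rightarrow> ('a, 'b) cmat) \<Rightarrow> ('n \<Rightarrow> ('c::finite, 'd::finite) cmat) \<Rightarrow> 'n \<Rightarrow> ('a, 'b) cmat" where
  "dmm_rhs \<kappa>1 \<kappa>2 B U V j = (\<lambda>\<alpha> \<beta>.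
     (\<Sum>\<gamma>\<in>UNIV. \<Sum>\<delta>\<in>UNIV. B j \<alpha> \<beta> \<gamma> \<delta> * U j \<gamma> \<delta>)
   + complex_of_real \<kappa>1 / of_nat CARD('n) *
       (\<Sum>k\<in>UNIV. frob (V j) (V k) * mmul (mmul (U k) (adj (U j))) (U j) \<alpha> \<beta>
                 - frob (V k) (V j) * mmul (mmul (U j) (adj (U k))) (U j) \<alpha> \<beta>)
   + complex_of_real \<kappa>2 / of_nat CARD('n) *
       (\<Sum>k\<in>UNIV. frob (V j) (V k) * mmul (mmul (U j) (adj (U j))) (U k) \<alpha> \<beta>
                 - frob (V k) (V j) * mmul (mmul (U j) (adj (U k))) (U j) \<alpha> \<beta>))"

definition is_dmm_solution ::
  "real \<Rightarrow> real \<Rightarrow> ('n::finite \<Rightarrow> 'a::finite \<Rightarrow> 'b::finite \<Rightarrow> 'a \<Rightarrow> 'b \<Rightarrow> complex)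
   \<Rightarrow> ('n \<Rightarrow> 'c::finite \<Rightarrow> 'd::finite \<Rightarrow> 'c \<Rightarrow> 'd \<Rightarrow> complex)
   \<Rightarrow> ('n \<Rightarrow> real \<Rightarrow> ('a, 'b) cmat) \<Rightarrow> ('n \<Rightarrow> real \<Rightarrow> ('c, 'd) cmat) \<Rightarrow> bool" where
  "is_dmm_solution \<kappa>1 \<kappa>2 B C U V \<longleftrightarrow>
     (\<forall>j t. t \<ge> 0 \<longrightarrow>
        (\<forall>\<alpha> \<beta>. ((\<lambda>s. U j s \<alpha> \<beta>) has_vector_derivative
                  dmm_rhs \<kappa>1 \<kappa>2 B (\<lambda>k. U k t) (\<lambda>k. V k t) j \<alpha> \<beta>) (at t within {0..})) \<and>
        (\<forall>\<gamma> \<delta>. ((\<lambda>s. V j s \<gamma> \<delta>) has_vector_derivative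
                  dmm_rhs \<kappa>1 \<kappa>2 C (\<lambda>k. V k t) (\<lambda>k. U k t) j \<gamma> \<delta>) (at t within {0..})))"

text \<open>Rank-4 tensors; index i \<in> {0,1} encoded as False/True.\<close>
type_synonym ('a, 'b, 'c, 'd) tensor4 = "'a \<Rightarrow> 'b \<Rightarrow> 'c \<Rightarrow> 'd \<Rightarrow> complex"

definition sel :: "bool \<Rightarrow> 'a \<Rightarrow> 'a \<Rightarrow> 'a" where
  "sel i x0 x1 = (if i then x1 else x0)"

definition tprod :: "('a, 'b) cmat \<Rightarrow> ('c, 'd) cmat \<Rightarrow> ('a, 'b, 'c, 'd) tensor4" where
  "tprod U V = (\<lambda>\<alpha> \<beta> \<gamma> \<delta>. U \<alpha> \<beta> * V \<gamma> \<delta>)"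

definition lohe_rhs ::
  "(bool \<Rightarrow> bool \<Rightarrow> bool \<Rightarrow> bool \<Rightarrow> real)
   \<Rightarrow> ('n::finite \<Rightarrow> 'a::finite \<Rightarrow> 'b::finite \<Rightarrow> 'c::finite \<Rightarrow> 'd::finite
                  \<Rightarrow> 'a \<Rightarrow> 'b \<Rightarrow> 'c \<Rightarrow> 'd \<Rightarrow> complex)
   \<Rightarrow> ('n \<Rightarrow> ('a, 'b, 'c, 'd) tensor4) \<Rightarrow> 'n \<Rightarrow> ('a, 'b, 'c, 'd) tensor4" where
  "lohe_rhs \<kappa> A T j = (\<lambda>a1 a2 a3 a4.
     let Tc = (\<lambda>x1 x2 x3 x4. (\<Sum>k\<in>UNIV. T k x1 x2 x3 x4) / of_nat CARD('n)) in
     (\<Sum>b1\<in>UNIV. \<Sum>b2\<in>UNIV. \<Sum>b3\<in>UNIV. \<Sum>b4\<in>UNIV.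
        A j a1 a2 a3 a4 b1 b2 b3 b4 * T j b1 b2 b3 b4)
   + (\<Sum>i1\<in>UNIV. \<Sum>i2\<in>UNIV. \<Sum>i3\<in>UNIV. \<Sum>i4\<in>UNIV.
        complex_of_real (\<kappa> i1 i2 i3 i4) *
        (\<Sum>b1\<in>UNIV. \<Sum>b2\<in>UNIV. \<Sum>b3\<in>UNIV. \<Sum>b4\<in>UNIV.
           Tc (sel i1 a1 b1) (sel i2 a2 b2) (sel i3 a3 b3) (sel i4 a4 b4)
             * cnj (T j b1 b2 b3 b4)
             * T j (sel (\<not> i1) a1 b1) (sel (\<not> i2) a2 b2) (sel (\<not> i3) a3 b3) (sel (\<not> i4) a4 b4)
         - T j (sel i1 a1 b1) (sel i2 a2 b2) (sel i3 a3 b3) (sel i4 a4 b4)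
             * cnj (Tc b1 b2 b3 b4)
             * T j (sel (\<not> i1) a1 b1) (sel (\<not> i2) a2 b2) (sel (\<not> i3) a3 b3) (sel (\<not> i4) a4 b4))))"

definition is_lohe_solution ::
  "(bool \<Rightarrow> bool \<Rightarrow> bool \<Rightarrow> bool \<Rightarrow> real)
   \<Rightarrow> ('n::finite \<Rightarrow> 'a::finite \<Rightarrow> 'b::finite \<Rightarrow> 'c::finite \<Rightarrow> 'd::finite
                  \<Rightarrow> 'a \<Rightarrow> 'b \<Rightarrow> 'c \<Rightarrow> 'd \<Rightarrow> complex)
   \<Rightarrow> ('n \<Rightarrow> real \<Rightarrow> ('a, 'b, 'c, 'd) tensor4) \<Rightarrow> bool" where
  "is_lohe_solution \<kappa> A T \<longleftrightarrow>
     (\<forall>j t. t \<ge> 0 \<longrightarrow> (\<forall>a1 a2 a3 a4.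
        ((\<lambda>s. T j s a1 a2 a3 a4) has_vector_derivative
           lohe_rhs \<kappa> A (\<lambda>k. T k t) j a1 a2 a3 a4) (at t within {0..})))"

definition dmm_kappa :: "real \<Rightarrow> real \<Rightarrow> bool \<Rightarrow> bool \<Rightarrow> bool \<Rightarrow> bool \<Rightarrow> real" where
  "dmm_kappa \<kappa>1 \<kappa>2 i1 i2 i3 i4 =
     (if (i1, i2, i3, i4) = (False, True, True, True) \<or> (i1, i2, i3, i4) = (True, True, False, True)
      then \<kappa>1
      else if (i1, i2, i3, i4) = (True, False, True, True) \<or> (i1, i2, i3, i4) = (True, True, True, False)
      then \<kappa>2 else 0)"

definition dmm_A ::
  "('n \<Rightarrow> 'a \<Rightarrow> 'b \<Rightarrow> 'a \<Rightarrow> 'b \<Rightarrow> complex) \<Rightarrow> ('n \<Rightarrow> 'c \<Rightarrow> 'd \<Rightarrow> 'c \<Rightarrow> 'd \<Rightarrow> complex)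
   \<Rightarrow> 'n \<Rightarrow> 'a \<Rightarrow> 'b \<Rightarrow> 'c \<Rightarrow> 'd \<Rightarrow> 'a \<Rightarrow> 'b \<Rightarrow> 'c \<Rightarrow> 'd \<Rightarrow> complex" where
  "dmm_A B C j a1 b1 c1 d1 a2 b2 c2 d2 =
     B j a1 b1 a2 b2 * (if c1 = c2 then 1 else 0) * (if d1 = d2 then 1 else 0)
   + C j c1 d1 c2 d2 * (if a1 = a2 then 1 else 0) * (if b1 = b2 then 1 else 0)"

end

theory Submission
  imports Defs
begin


lemma at_Ici_eq:
  fixes t b :: real
  assumes "0 \<le> t" "t < b"
  shows "at t within {0..b} = at t within {0..}"
  by (rule at_within_nhd[where S="{..<b}"]) (use assms in auto)

lemma integral_Ici_deriv:
  fixes g :: "real \<Rightarrow> 'a::banach"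
  assumes "continuous_on {0..} g" "0 \<le> t"
  shows "((\<lambda>u. integral {0..u} g) has_vector_derivative g t) (at t within {0..})"
proof -
  have "continuous_on {0..t+1} g" using assms(1) by (rule continuous_on_subset) auto
  then have "((\<lambda>u. integral {0..u} g) has_vector_derivative g t) (at t within {0..t+1})"
    by (rule integral_has_vector_derivative) (use assms in auto)
  then show ?thesis using at_Ici_eq[of t "t+1"] assms by simp
qed

lemma cont_Ici_from_deriv:
  fixes f :: "real \<Rightarrow> 'a::real_normed_vector"
  assumes "\<And>t. 0 \<le> t \<Longrightarrow> (f has_vector_derivative f' t) (at t within {0..})"
  shows "continuous_on {0..} f"
  unfolding continuous_on_eq_continuous_within
  using assms has_vector_derivative_continuous by (auto intro: has_vector_derivative_continuous)

lemma integral_Ici_cont: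
  fixes g :: "real \<Rightarrow> 'a::banach"
  assumes "continuous_on {0..} g"
  shows "continuous_on {0..} (\<lambda>u. integral {0..u} g)"
  by (rule cont_Ici_from_deriv[OF integral_Ici_deriv[OF assms]]) auto



lemma Mv_bound:
  fixes c :: "'i::finite \<Rightarrow> 'i \<Rightarrow> complex" and v :: "complex^'i"
  shows "norm (\<chi> i. \<Sum>k\<in>UNIV. c i k * v$k) \<le> (\<Sum>i\<in>UNIV. \<Sum>k\<in>UNIV. cmod (c i k)) * norm v"
proof -
  have "norm (\<chi> i. \<Sum>k\<in>UNIV. c i k * v$k) \<le> (\<Sum>i\<in>UNIV. norm (\<Sum>k\<in>UNIV. c i k * v$k))"
    unfolding norm_vec_def by (rule order_trans[OF L2_set_le_sum]) auto
  also have "\<dots> \<le> (\<Sum>i\<in>UNIV. \<Sum>k\<in>UNIV. cmod (c i k) * norm v)"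
  proof (rule sum_mono)
    fix i
    have "norm (\<Sum>k\<in>UNIV. c i k * v$k) \<le> (\<Sum>k\<in>UNIV. norm (c i k * v$k))" by (rule norm_sum)
    also have "\<dots> \<le> (\<Sum>k\<in>UNIV. cmod (c i k) * norm v)"
      by (rule sum_mono) (simp add: norm_mult mult_left_mono Finite_Cartesian_Product.norm_nth_le)
    finally show "norm (\<Sum>k\<in>UNIV. c i k * v$k) \<le> (\<Sum>k\<in>UNIV. cmod (c i k) * norm v)" .
  qed
  also have "\<dots> = (\<Sum>i\<in>UNIV. \<Sum>k\<in>UNIV. cmod (c i k)) * norm v"
    by (simp add: sum_distrib_right)
  finally show ?thesis .
qed

lemma exp_integral:
  fixes K :: "real \<Rightarrow> real"
  assumes contK: "continuous_on UNIV K" and "0 \<le> t"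
  defines "\<Lambda> \<equiv> \<lambda>t. 2 * integral {0..t} K"
  shows "integral {0..t} (\<lambda>s. K s * exp (\<Lambda> s)) = (exp (\<Lambda> t) - 1) / 2"
proof -
  have cK: "continuous_on {0..} K" using contK by (rule continuous_on_subset) auto
  have "((\<lambda>s. exp (\<Lambda> s) / 2) has_vector_derivative K s * exp (\<Lambda> s)) (at s within {0..t})"
    if "s \<in> {0..t}" for s
  proof -
    have "((\<lambda>u. integral {0..u} K) has_vector_derivative K s) (at s within {0..})"
      by (rule integral_Ici_deriv[OF cK]) (use that in auto)
    then have "((\<lambda>u. integral {0..u} K) has_real_derivative K s) (at s within {0..t})"
      by (auto simp: has_real_derivative_iff_has_vector_derivative intro: has_vector_derivative_within_subset)
    then have "((\<lambda>s. exp (\<Lambda> s) / 2) has_real_derivative (exp (\<Lambda> s) * (2 * K s)) / 2) (at s within {0..t})"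
      unfolding \<Lambda>_def by (auto intro!: derivative_eq_intros)
    then show ?thesis by (simp add: has_real_derivative_iff_has_vector_derivative mult.commute)
  qed
  from fundamental_theorem_of_calculus[OF assms(2) this]
  have "((\<lambda>s. K s * exp (\<Lambda> s)) has_integral (exp (\<Lambda> t) / 2 - exp (\<Lambda> 0) / 2)) {0..t}" by simp
  then show ?thesis by (simp add: integral_unique \<Lambda>_def diff_divide_distrib)
qed



lemma cont_int_Ici:
  fixes g :: "real \<Rightarrow> 'a::banach"
  assumes "continuous_on {0..} g"
  shows "g integrable_on {0..t}"
proof (rule integrable_continuous_interval)
  show "continuous_on {0..t} g" using assms by (rule continuous_on_subset) auto
qed

lemma lin_ode_exists:
  fixes m :: "real \<Rightarrow> 'i::finite \<Rightarrow> 'i \<Rightarrow> complex" and x0 :: "'i \<Rightarrow> complex"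
  assumes cont: "\<And>i k. continuous_on UNIV (\<lambda>t. m t i k)"
  shows "\<exists>x. x 0 = x0 \<and> (\<forall>t\<ge>0. \<forall>i. ((\<lambda>s. x s i) has_vector_derivative
            (\<Sum>k\<in>UNIV. m t i k * x t k)) (at t within {0..}))"
proof -
  define K where "K t = 1 + (\<Sum>i\<in>UNIV. \<Sum>k\<in>UNIV. cmod (m t i k))" for t
  define Mv where "Mv t v = (\<chi> i. \<Sum>k\<in>UNIV. m t i k * v$k)" for t and v :: "complex^'i"
  define \<Lambda> where "\<Lambda> t = 2 * integral {0..t} K" for t
  define xv :: "complex^'i" where "xv = (\<chi> i. x0 i)"
  have contK: "continuous_on UNIV K" unfolding K_def by (intro continuous_intros cont)
  have cK0: "continuous_on {0..} K" using contK by (rule continuous_on_subset) auto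
  have K1: "K t \<ge> 1" for t unfolding K_def by (simp add: sum_nonneg)
  have K0: "K t \<ge> 0" for t using K1[of t] by linarith
  have Mvb: "norm (Mv t v) \<le> K t * norm v" for t v
  proof -
    have "norm (Mv t v) \<le> (\<Sum>i\<in>UNIV. \<Sum>k\<in>UNIV. cmod (m t i k)) * norm v"
      unfolding Mv_def by (rule Mv_bound)
    also have "\<dots> \<le> K t * norm v" unfolding K_def by (rule mult_right_mono) auto
    finally show ?thesis .
  qed
  have Mv_diff: "Mv t v - Mv t u = Mv t (v - u)" for t v u
    unfolding Mv_def by (simp add: vec_eq_iff right_diff_distrib sum_subtractf)
  have \<Lambda>d: "(\<Lambda> has_real_derivative 2 * K t) (at t within {0..})" if "0 \<le> t" for t
  proof -
    have "((\<lambda>u. integral {0..u} K) has_real_derivative K t) (at t within {0..})"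
      using integral_Ici_deriv[OF cK0 that] by (simp add: has_real_derivative_iff_has_vector_derivative)
    then show ?thesis unfolding \<Lambda>_def by (auto intro!: derivative_eq_intros)
  qed
  have \<Lambda>c: "continuous_on {0..} \<Lambda>"
    using \<Lambda>d by (auto simp: continuous_on_eq_continuous_within intro: DERIV_continuous)
  have \<Lambda>nn: "0 \<le> \<Lambda> t" if "0 \<le> t" for t
    unfolding \<Lambda>_def using K0 by (auto intro!: integral_nonneg cont_int_Ici[OF cK0])
  have E: "integral {0..t} (\<lambda>s. K s * exp (\<Lambda> s)) = (exp (\<Lambda> t) - 1) / 2" if "0 \<le> t" for t
    using exp_integral[OF contK that] by (simp add: \<Lambda>_def)
  define g where "g z s = Mv s (exp (\<Lambda> s) *\<^sub>R apply_bcontfun z s)" for z :: "real \<Rightarrow>\<^sub>C (complex^'i)" and s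
  define P where "P z t = exp (- \<Lambda> (max 0 t)) *\<^sub>R (xv + integral {0..max 0 t} (g z))" for z t
  have gc: "continuous_on {0..} (g z)" for z
  proof -
    have cm: "continuous_on {0..} (\<lambda>t. m t i k)" for i k using cont by (rule continuous_on_subset) auto
    show ?thesis unfolding g_def Mv_def
      by (intro continuous_intros cm \<Lambda>c continuous_on_apply_bcontfun)
  qed
  have gint: "(\<lambda>s. g z s) integrable_on {0..t}" for z t by (rule cont_int_Ici[OF gc])
  have KEint: "(\<lambda>s. K s * exp (\<Lambda> s) * c) integrable_on {0..t}" for c t
    by (rule cont_int_Ici) (intro continuous_intros cK0 \<Lambda>c)
  have gdiff: "norm (g z s - g y s) \<le> K s * exp (\<Lambda> s) * dist z y" for z y s
  proof -
    have "norm (g z s - g y s) = norm (Mv s (exp (\<Lambda> s) *\<^sub>R (apply_bcontfun z s - apply_bcontfun y s)))"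
      unfolding g_def Mv_diff by (simp add: scaleR_diff_right)
    also have "\<dots> \<le> K s * (exp (\<Lambda> s) * norm (apply_bcontfun z s - apply_bcontfun y s))"
      using Mvb[of s "exp (\<Lambda> s) *\<^sub>R (apply_bcontfun z s - apply_bcontfun y s)"] by simp
    also have "\<dots> \<le> K s * (exp (\<Lambda> s) * dist z y)"
      using dist_bounded[of z s y] K0 by (intro mult_left_mono) (auto simp: dist_norm)
    finally show ?thesis by simp
  qed
  have gbound: "norm (g z s) \<le> K s * exp (\<Lambda> s) * B" if "\<And>s. norm (apply_bcontfun z s) \<le> B" for z s B
  proof -
    have "norm (g z s) \<le> K s * (exp (\<Lambda> s) * norm (apply_bcontfun z s))"
      unfolding g_def using Mvb[of s "exp (\<Lambda> s) *\<^sub>R apply_bcontfun z s"] by simp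
    also have "\<dots> \<le> K s * (exp (\<Lambda> s) * B)"
      using that K0 by (intro mult_left_mono) auto
    finally show ?thesis by simp
  qed
  have intbound: "norm (exp (- \<Lambda> t) *\<^sub>R integral {0..t} f) \<le> B / 2"
    if "0 \<le> t" "0 \<le> B" "f integrable_on {0..t}" "\<And>s. norm (f s) \<le> K s * exp (\<Lambda> s) * B" for t B and f :: "real \<Rightarrow> complex^'i"
  proof -
    have "norm (integral {0..t} f) \<le> integral {0..t} (\<lambda>s. K s * exp (\<Lambda> s) * B)"
      by (rule Henstock_Kurzweil_Integration.integral_norm_bound_integral[OF that(3) KEint]) (rule that(4))
    also have "\<dots> = (exp (\<Lambda> t) - 1) / 2 * B"
      using E[OF that(1)] by (simp add: integral_mult_left)
    finally have "exp (- \<Lambda> t) * norm (integral {0..t} f) \<le> exp (- \<Lambda> t) * ((exp (\<Lambda> t) - 1) / 2 * B)"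
      by (rule mult_left_mono) simp
    also have "\<dots> = (1 - exp (- \<Lambda> t)) / 2 * B" by (simp add: field_simps exp_minus)
    also have "\<dots> \<le> B / 2"
    proof -
      have "(1 - exp (- \<Lambda> t)) * B \<le> 1 * B" using that(2) by (intro mult_right_mono) auto
      then show ?thesis by simp
    qed
    finally show ?thesis by simp
  qed
  have Pc: "continuous_on UNIV (P z)" for z
  proof -
    have "continuous_on {0..} (\<lambda>t. exp (- \<Lambda> t) *\<^sub>R (xv + integral {0..t} (g z)))"
      by (intro continuous_intros \<Lambda>c integral_Ici_cont gc)
    then show ?thesis unfolding P_def
      by (rule continuous_on_compose2[of _ _ _ "\<lambda>t. max 0 t", unfolded o_def]) (auto intro!: continuous_intros)
  qed
  have Pbc: "P z \<in> bcontfun" for z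
  proof -
    obtain B where B: "\<And>s. norm (apply_bcontfun z s) \<le> B"
      using bounded_apply_bcontfun[of z] by (auto simp: bounded_iff)
    have B0: "0 \<le> B" using B[of 0] norm_ge_zero order_trans by blast
    show ?thesis
    proof (rule bcontfun_normI[OF Pc])
      fix t :: real
      let ?t = "max 0 t"
      have "norm (P z t) \<le> norm (exp (- \<Lambda> ?t) *\<^sub>R xv) + norm (exp (- \<Lambda> ?t) *\<^sub>R integral {0..?t} (g z))"
        unfolding P_def scaleR_right_distrib by (rule norm_triangle_ineq)
      also have "\<dots> \<le> norm xv + B / 2"
      proof (rule add_mono)
        have "exp (- \<Lambda> ?t) \<le> 1" using \<Lambda>nn[of ?t] by simp
        then show "norm (exp (- \<Lambda> ?t) *\<^sub>R xv) \<le> norm xv"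
          by (simp add: mult_left_le_one_le)
        show "norm (exp (- \<Lambda> ?t) *\<^sub>R integral {0..?t} (g z)) \<le> B / 2"
          by (rule intbound[OF _ B0 gint gbound[OF B]]) simp
      qed
      finally show "norm (P z t) \<le> norm xv + B / 2" .
    qed
  qed
  define \<Phi> where "\<Phi> z = Bcontfun (P z)" for z
  have \<Phi>app: "apply_bcontfun (\<Phi> z) = P z" for z
    unfolding \<Phi>_def using Pbc by (simp add: Bcontfun_inverse)
  have contr: "dist (\<Phi> z) (\<Phi> y) \<le> 1/2 * dist z y" for z y
  proof (rule dist_bound)
    fix t :: real
    let ?t = "max 0 t"
    have "P z t - P y t = exp (- \<Lambda> ?t) *\<^sub>R integral {0..?t} (\<lambda>s. g z s - g y s)"
      unfolding P_def by (simp add: integral_diff[OF gint gint] scaleR_diff_right scaleR_right_distrib)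
    also have "norm \<dots> \<le> dist z y / 2"
      by (rule intbound) (auto intro!: integrable_diff gint gdiff)
    finally show "dist (apply_bcontfun (\<Phi> z) t) (apply_bcontfun (\<Phi> y) t) \<le> 1/2 * dist z y"
      by (simp add: \<Phi>app dist_norm)
  qed
  obtain z where z: "\<Phi> z = z" using banach_fix_type[of "1/2" \<Phi>] contr by auto
  define x where "x t = xv + integral {0..t} (g z)" for t
  have xz: "x t = exp (\<Lambda> t) *\<^sub>R apply_bcontfun z t" if "0 \<le> t" for t
  proof -
    have "apply_bcontfun z t = P z t" using \<Phi>app[of z] z by simp
    also have "\<dots> = exp (- \<Lambda> t) *\<^sub>R x t" using that by (simp add: P_def x_def max_absorb2)
    finally show ?thesis by (simp add: exp_minus)
  qed
  have gx: "g z s = Mv s (x s)" if "0 \<le> s" for s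
    by (simp add: g_def xz[OF that])
  have xd: "(x has_vector_derivative Mv t (x t)) (at t within {0..})" if "0 \<le> t" for t
  proof -
    have "(x has_vector_derivative 0 + g z t) (at t within {0..})"
      unfolding x_def by (intro derivative_intros integral_Ici_deriv gc that)
    then show ?thesis using gx[OF that] by simp
  qed
  show ?thesis
  proof (intro exI conjI allI impI)
    show "(\<lambda>i. x 0 $ i) = x0" by (simp add: x_def xv_def)
    fix t :: real and i assume t: "0 \<le> t"
    have "(x has_derivative (\<lambda>h. h *\<^sub>R Mv t (x t))) (at t within {0..})"
      using xd[OF t] by (simp add: has_vector_derivative_def)
    from bounded_linear.has_derivative[OF bounded_linear_vec_nth[of i] this]
    have "((\<lambda>s. x s $ i) has_derivative (\<lambda>h. h *\<^sub>R (Mv t (x t) $ i))) (at t within {0..})"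
      by simp
    then show "((\<lambda>s. x s $ i) has_vector_derivative (\<Sum>k\<in>UNIV. m t i k * x t $ k)) (at t within {0..})"
      by (simp add: has_vector_derivative_def Mv_def)
  qed
qed



lemma prod_le_sq: "(a::real) * b \<le> (a^2 + b^2) / 2"
proof -
  have "0 \<le> (a - b)^2" by simp
  then show ?thesis by (simp add: power2_eq_square algebra_simps)
qed

lemma lin_ode_unique:
  fixes m :: "real \<Rightarrow> 'i::finite \<Rightarrow> 'i \<Rightarrow> complex" and w :: "real \<Rightarrow> 'i \<Rightarrow> complex"
  assumes cont: "\<And>i k. continuous_on UNIV (\<lambda>t. m t i k)"
    and w0: "\<And>i. w 0 i = 0"
    and wd: "\<And>t i. 0 \<le> t \<Longrightarrow> ((\<lambda>s. w s i) has_vector_derivative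
                 (\<Sum>k\<in>UNIV. m t i k * w t k)) (at t within {0..})"
    and t: "0 \<le> t"
  shows "w t i = 0"
proof -
  define K where "K t = (\<Sum>i\<in>UNIV. \<Sum>k\<in>UNIV. cmod (m t i k))" for t
  define \<Lambda> where "\<Lambda> t = 2 * integral {0..t} K" for t
  define D where "D t i = (\<Sum>k\<in>UNIV. m t i k * w t k)" for t i
  define \<psi> where "\<psi> t = (\<Sum>i\<in>UNIV. (cmod (w t i))^2)" for t
  define \<phi> where "\<phi> t = exp (- \<Lambda> t) * \<psi> t" for t
  have contK: "continuous_on UNIV K" unfolding K_def by (intro continuous_intros cont)
  have cK0: "continuous_on {0..} K" using contK by (rule continuous_on_subset) auto
  have \<Lambda>d: "(\<Lambda> has_real_derivative 2 * K t) (at t within {0..})" if "0 \<le> t" for t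
  proof -
    have "((\<lambda>u. integral {0..u} K) has_real_derivative K t) (at t within {0..})"
      using integral_Ici_deriv[OF cK0 that] by (simp add: has_real_derivative_iff_has_vector_derivative)
    then show ?thesis unfolding \<Lambda>_def by (auto intro!: derivative_eq_intros)
  qed
  have \<psi>_eq: "\<psi> t = Re (\<Sum>i\<in>UNIV. cnj (w t i) * w t i)" for t
  proof -
    have "Re (cnj z * z) = (cmod z)^2" for z :: complex
      by (simp only: cmod_power2) (simp add: power2_eq_square)
    then show ?thesis unfolding \<psi>_def by (simp add: Re_sum)
  qed
  have \<psi>d: "(\<psi> has_real_derivative Re (\<Sum>i\<in>UNIV. cnj (w t i) * D t i + cnj (D t i) * w t i)) (at t within {0..})"
    if "0 \<le> t" for t
  proof -
    have "((\<lambda>s. \<Sum>i\<in>UNIV. cnj (w s i) * w s i) has_vector_derivative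
            (\<Sum>i\<in>UNIV. cnj (w t i) * D t i + cnj (D t i) * w t i)) (at t within {0..})"
      by (intro derivative_intros wd[OF that, folded D_def])
    then show ?thesis unfolding \<psi>_eq has_vector_derivative_complex_iff by simp
  qed
  have wi_le: "cmod (w t i) ^ 2 \<le> \<psi> t" for t i
    unfolding \<psi>_def by (rule member_le_sum) auto
  have key: "Re (\<Sum>i\<in>UNIV. cnj (w t i) * D t i + cnj (D t i) * w t i) \<le> 2 * K t * \<psi> t" for t
  proof -
    have "Re (\<Sum>i\<in>UNIV. cnj (w t i) * D t i + cnj (D t i) * w t i)
          = (\<Sum>i\<in>UNIV. 2 * Re (cnj (w t i) * D t i))"
      by (simp add: Re_sum) (rule sum.cong; simp)
    also have "\<dots> \<le> (\<Sum>i\<in>UNIV. 2 * (\<Sum>k\<in>UNIV. cmod (m t i k) * \<psi> t))"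
    proof (rule sum_mono)
      fix i
      have "Re (cnj (w t i) * D t i) \<le> cmod (cnj (w t i) * D t i)" by (rule complex_Re_le_cmod)
      also have "\<dots> = cmod (w t i) * cmod (D t i)" by (simp add: norm_mult)
      also have "\<dots> \<le> cmod (w t i) * (\<Sum>k\<in>UNIV. cmod (m t i k) * cmod (w t k))"
        unfolding D_def by (rule mult_left_mono) (auto intro!: order_trans[OF norm_sum] simp: norm_mult)
      also have "\<dots> = (\<Sum>k\<in>UNIV. cmod (m t i k) * (cmod (w t i) * cmod (w t k)))"
        by (simp add: sum_distrib_left algebra_simps)
      also have "\<dots> \<le> (\<Sum>k\<in>UNIV. cmod (m t i k) * \<psi> t)"
      proof (rule sum_mono, rule mult_left_mono)
        fix k
        have "cmod (w t i) * cmod (w t k) \<le> ((cmod (w t i))^2 + (cmod (w t k))^2) / 2" by (rule prod_le_sq)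
        also have "\<dots> \<le> (\<psi> t + \<psi> t) / 2" using wi_le[of t i] wi_le[of t k] by simp
        finally show "cmod (w t i) * cmod (w t k) \<le> \<psi> t" by simp
      qed simp
      finally show "2 * Re (cnj (w t i) * D t i) \<le> 2 * (\<Sum>k\<in>UNIV. cmod (m t i k) * \<psi> t)" by simp
    qed
    also have "\<dots> = 2 * K t * \<psi> t" unfolding K_def by (simp add: sum_distrib_left sum_distrib_right mult.assoc)
    finally show ?thesis .
  qed
  have \<phi>d: "(\<phi> has_real_derivative exp (- \<Lambda> t) * (- (2 * K t)) * \<psi> t
               + exp (- \<Lambda> t) * Re (\<Sum>i\<in>UNIV. cnj (w t i) * D t i + cnj (D t i) * w t i)) (at t within {0..})"
    if "0 \<le> t" for t
  proof -
    have e: "((\<lambda>s. exp (- \<Lambda> s)) has_real_derivative exp (- \<Lambda> t) * (- (2 * K t))) (at t within {0..})"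
      by (rule DERIV_chain2[OF DERIV_exp DERIV_minus[OF \<Lambda>d[OF that]]])
    show ?thesis unfolding \<phi>_def using DERIV_mult[OF e \<psi>d[OF that]] by (simp add: algebra_simps)
  qed
  have \<phi>c: "continuous_on {0..} \<phi>"
    using \<phi>d by (auto simp: continuous_on_eq_continuous_within intro: DERIV_continuous)
  have "\<phi> 0 \<ge> \<phi> t"
  proof (rule DERIV_nonpos_imp_decreasing_open[OF t])
    fix x :: real assume x: "0 < x" "x < t"
    have "at x within {0..} = at x" by (rule at_within_interior) (use x in auto)
    then have "DERIV \<phi> x :> exp (- \<Lambda> x) * (- (2 * K x)) * \<psi> x
               + exp (- \<Lambda> x) * Re (\<Sum>i\<in>UNIV. cnj (w x i) * D x i + cnj (D x i) * w x i)"
      using \<phi>d[of x] x by simp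
    moreover have "exp (- \<Lambda> x) * (- (2 * K x)) * \<psi> x
               + exp (- \<Lambda> x) * Re (\<Sum>i\<in>UNIV. cnj (w x i) * D x i + cnj (D x i) * w x i) \<le> 0"
    proof -
      have "exp (- \<Lambda> x) * Re (\<Sum>i\<in>UNIV. cnj (w x i) * D x i + cnj (D x i) * w x i)
            \<le> exp (- \<Lambda> x) * (2 * K x * \<psi> x)" by (rule mult_left_mono[OF key]) simp
      then show ?thesis by (simp add: algebra_simps)
    qed
    ultimately show "\<exists>y. DERIV \<phi> x :> y \<and> y \<le> 0" by blast
  next
    show "continuous_on {0..t} \<phi>" using \<phi>c by (rule continuous_on_subset) auto
  qed
  moreover have "\<phi> 0 = 0" unfolding \<phi>_def \<psi>_def by (simp add: w0)
  moreover have "\<psi> t \<ge> 0" unfolding \<psi>_def by (simp add: sum_nonneg)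
  ultimately have "\<psi> t = 0" unfolding \<phi>_def
    by (metis exp_gt_zero mult_le_0_iff order_antisym_conv order_less_le)
  then have "(cmod (w t i))^2 \<le> 0" using wi_le[of t i] by simp
  then show ?thesis by simp
qed


definition tc :: "('n::finite \<Rightarrow> ('a, 'b, 'c, 'd) tensor4) \<Rightarrow> ('a, 'b, 'c, 'd) tensor4" where
  "tc T = (\<lambda>x1 x2 x3 x4. (\<Sum>k\<in>UNIV. T k x1 x2 x3 x4) / of_nat CARD('n))"

definition lohe_lin ::
  "(bool \<Rightarrow> bool \<Rightarrow> bool \<Rightarrow> bool \<Rightarrow> real)
   \<Rightarrow> ('n::finite \<Rightarrow> 'a::finite \<Rightarrow> 'b::finite \<Rightarrow> 'c::finite \<Rightarrow> 'd::finite
                  \<Rightarrow> 'a \<Rightarrow> 'b \<Rightarrow> 'c \<Rightarrow> 'd \<Rightarrow> complex)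
   \<Rightarrow> ('n \<Rightarrow> ('a, 'b, 'c, 'd) tensor4) \<Rightarrow> ('n \<Rightarrow> ('a, 'b, 'c, 'd) tensor4) \<Rightarrow> 'n \<Rightarrow> ('a, 'b, 'c, 'd) tensor4" where
  "lohe_lin \<kappa> A T S j = (\<lambda>a1 a2 a3 a4.
     (\<Sum>b1\<in>UNIV. \<Sum>b2\<in>UNIV. \<Sum>b3\<in>UNIV. \<Sum>b4\<in>UNIV.
        A j a1 a2 a3 a4 b1 b2 b3 b4 * S j b1 b2 b3 b4)
   + (\<Sum>i1\<in>UNIV. \<Sum>i2\<in>UNIV. \<Sum>i3\<in>UNIV. \<Sum>i4\<in>UNIV.
        complex_of_real (\<kappa> i1 i2 i3 i4) *
        (\<Sum>b1\<in>UNIV. \<Sum>b2\<in>UNIV. \<Sum>b3\<in>UNIV. \<Sum>b4\<in>UNIV.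
           tc T (sel i1 a1 b1) (sel i2 a2 b2) (sel i3 a3 b3) (sel i4 a4 b4)
             * cnj (T j b1 b2 b3 b4)
             * S j (sel (\<not> i1) a1 b1) (sel (\<not> i2) a2 b2) (sel (\<not> i3) a3 b3) (sel (\<not> i4) a4 b4)
         - T j (sel i1 a1 b1) (sel i2 a2 b2) (sel i3 a3 b3) (sel i4 a4 b4)
             * cnj (tc T b1 b2 b3 b4)
             * S j (sel (\<not> i1) a1 b1) (sel (\<not> i2) a2 b2) (sel (\<not> i3) a3 b3) (sel (\<not> i4) a4 b4))))"

lemma lohe_rhs_lin: "lohe_rhs \<kappa> A T j = lohe_lin \<kappa> A T T j"
  unfolding lohe_rhs_def lohe_lin_def tc_def Let_def ..

definition "W1 T j a1 b1 = (\<Sum>b2\<in>UNIV. \<Sum>b3\<in>UNIV. \<Sum>b4\<in>UNIV.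
   tc T a1 b2 b3 b4 * cnj (T j b1 b2 b3 b4) - T j a1 b2 b3 b4 * cnj (tc T b1 b2 b3 b4))"
definition "W2 T j b2 a2 = (\<Sum>b1\<in>UNIV. \<Sum>b3\<in>UNIV. \<Sum>b4\<in>UNIV.
   tc T b1 a2 b3 b4 * cnj (T j b1 b2 b3 b4) - T j b1 a2 b3 b4 * cnj (tc T b1 b2 b3 b4))"
definition "W3 T j a3 b3 = (\<Sum>b1\<in>UNIV. \<Sum>b2\<in>UNIV. \<Sum>b4\<in>UNIV.
   tc T b1 b2 a3 b4 * cnj (T j b1 b2 b3 b4) - T j b1 b2 a3 b4 * cnj (tc T b1 b2 b3 b4))"
definition "W4 T j b4 a4 = (\<Sum>b1\<in>UNIV. \<Sum>b2\<in>UNIV. \<Sum>b3\<in>UNIV.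
   tc T b1 b2 b3 a4 * cnj (T j b1 b2 b3 b4) - T j b1 b2 b3 a4 * cnj (tc T b1 b2 b3 b4))"

definition ulin where
  "ulin \<kappa>1 \<kappa>2 B T U j = (\<lambda>a1 a2. (\<Sum>b1\<in>UNIV. \<Sum>b2\<in>UNIV. B j a1 a2 b1 b2 * U j b1 b2)
     + complex_of_real \<kappa>1 * (\<Sum>b1\<in>UNIV. W1 T j a1 b1 * U j b1 a2)
     + complex_of_real \<kappa>2 * (\<Sum>b2\<in>UNIV. U j a1 b2 * W2 T j b2 a2))"

definition vlin where
  "vlin \<kappa>1 \<kappa>2 C T V j = (\<lambda>a3 a4. (\<Sum>b3\<in>UNIV. \<Sum>b4\<in>UNIV. C j a3 a4 b3 b4 * V j b3 b4)
     + complex_of_real \<kappa>1 * (\<Sum>b3\<in>UNIV. W3 T j a3 b3 * V j b3 a4)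
     + complex_of_real \<kappa>2 * (\<Sum>b4\<in>UNIV. V j a3 b4 * W4 T j b4 a4))"

lemma sum_if_out: "(\<Sum>x\<in>A. if P then f x else 0) = (if P then (\<Sum>x\<in>A. f x) else 0)"
  by (cases P) auto
lemma mult_delta_r: "(x::complex) * (if P then 1 else 0) = (if P then x else 0)" by simp
lemma mult_delta_l: "(if P then 1 else 0) * (x::complex) = (if P then x else 0)" by simp
lemma if0_mult: "(if P then x else 0) * (y::complex) = (if P then x * y else 0)" by simp
lemma mult_if0: "(y::complex) * (if P then x else 0) = (if P then y * x else 0)" by simp
lemmas delta_simps = sum_if_out mult_delta_r mult_delta_l if0_mult mult_if0

lemma sum3_rot: "(\<Sum>x\<in>A. \<Sum>y\<in>B. \<Sum>z\<in>C. f x y z) = (\<Sum>z\<in>C. \<Sum>x\<in>A. \<Sum>y\<in>B. f x y z)"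
  by (subst sum.swap) (subst (2) sum.swap, rule refl)
lemma sum4_rot: "(\<Sum>x\<in>A. \<Sum>y\<in>B. \<Sum>z\<in>C. \<Sum>w\<in>D. f x y z w) = (\<Sum>w\<in>D. \<Sum>x\<in>A. \<Sum>y\<in>B. \<Sum>z\<in>C. f x y z w)"
proof -
  have "(\<Sum>y\<in>B. \<Sum>z\<in>C. \<Sum>w\<in>D. f x y z w) = (\<Sum>w\<in>D. \<Sum>y\<in>B. \<Sum>z\<in>C. f x y z w)" for x
    by (rule sum3_rot)
  then have "(\<Sum>x\<in>A. \<Sum>y\<in>B. \<Sum>z\<in>C. \<Sum>w\<in>D. f x y z w) = (\<Sum>x\<in>A. \<Sum>w\<in>D. \<Sum>y\<in>B. \<Sum>z\<in>C. f x y z w)"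
    by simp
  also have "\<dots> = (\<Sum>w\<in>D. \<Sum>x\<in>A. \<Sum>y\<in>B. \<Sum>z\<in>C. f x y z w)" by (rule sum.swap)
  finally show ?thesis .
qed

lemma T1: "(\<Sum>b1\<in>UNIV. \<Sum>b2\<in>UNIV. \<Sum>b3\<in>UNIV. \<Sum>b4\<in>UNIV.
   tc T a1 b2 b3 b4 * cnj (T j b1 b2 b3 b4) * tprod (U j) (V j) b1 a2 a3 a4 -
   T j a1 b2 b3 b4 * cnj (tc T b1 b2 b3 b4) * tprod (U j) (V j) b1 a2 a3 a4)
  = (\<Sum>b1\<in>UNIV. W1 T j a1 b1 * U j b1 a2) * V j a3 a4"
  unfolding W1_def tprod_def by (simp only: sum_distrib_left sum_distrib_right left_diff_distrib right_diff_distrib) (simp add: mult_ac)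

lemma T2: "(\<Sum>b1\<in>UNIV. \<Sum>b2\<in>UNIV. \<Sum>b3\<in>UNIV. \<Sum>b4\<in>UNIV.
   tc T b1 a2 b3 b4 * cnj (T j b1 b2 b3 b4) * tprod (U j) (V j) a1 b2 a3 a4 -
   T j b1 a2 b3 b4 * cnj (tc T b1 b2 b3 b4) * tprod (U j) (V j) a1 b2 a3 a4)
  = (\<Sum>b2\<in>UNIV. U j a1 b2 * W2 T j b2 a2) * V j a3 a4"
  unfolding W2_def tprod_def by (subst sum.swap) (simp only: sum_distrib_left sum_distrib_right left_diff_distrib right_diff_distrib, simp add: mult_ac)

lemma T3: "(\<Sum>b1\<in>UNIV. \<Sum>b2\<in>UNIV. \<Sum>b3\<in>UNIV. \<Sum>b4\<in>UNIV.
   tc T b1 b2 a3 b4 * cnj (T j b1 b2 b3 b4) * tprod (U j) (V j) a1 a2 b3 a4 -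
   T j b1 b2 a3 b4 * cnj (tc T b1 b2 b3 b4) * tprod (U j) (V j) a1 a2 b3 a4)
  = U j a1 a2 * (\<Sum>b3\<in>UNIV. W3 T j a3 b3 * V j b3 a4)"
  unfolding W3_def tprod_def by (subst sum3_rot) (simp only: sum_distrib_left sum_distrib_right left_diff_distrib right_diff_distrib, simp add: mult_ac)

lemma T4: "(\<Sum>b1\<in>UNIV. \<Sum>b2\<in>UNIV. \<Sum>b3\<in>UNIV. \<Sum>b4\<in>UNIV.
   tc T b1 b2 b3 a4 * cnj (T j b1 b2 b3 b4) * tprod (U j) (V j) a1 a2 a3 b4 -
   T j b1 b2 b3 a4 * cnj (tc T b1 b2 b3 b4) * tprod (U j) (V j) a1 a2 a3 b4)
  = U j a1 a2 * (\<Sum>b4\<in>UNIV. V j a3 b4 * W4 T j b4 a4)"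
  unfolding W4_def tprod_def by (subst sum4_rot) (simp only: sum_distrib_left sum_distrib_right left_diff_distrib right_diff_distrib, simp add: mult_ac)

lemma A_term: fixes B :: "'n \<Rightarrow> 'a::finite \<Rightarrow> 'b::finite \<Rightarrow> 'a \<Rightarrow> 'b \<Rightarrow> complex"
  and C :: "'n \<Rightarrow> 'c::finite \<Rightarrow> 'd::finite \<Rightarrow> 'c \<Rightarrow> 'd \<Rightarrow> complex" shows
  "(\<Sum>b1\<in>UNIV. \<Sum>b2\<in>UNIV. \<Sum>b3\<in>UNIV. \<Sum>b4\<in>UNIV.
        dmm_A B C j a1 a2 a3 a4 b1 b2 b3 b4 * tprod (U j) (V j) b1 b2 b3 b4)
   = (\<Sum>b1\<in>UNIV. \<Sum>b2\<in>UNIV. B j a1 a2 b1 b2 * U j b1 b2) * V j a3 a4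
     + U j a1 a2 * (\<Sum>b3\<in>UNIV. \<Sum>b4\<in>UNIV. C j a3 a4 b3 b4 * V j b3 b4)"
  apply (simp add: dmm_A_def tprod_def distrib_right sum.distrib)
  apply (simp add: delta_simps)
  apply (simp add: sum_distrib_left sum_distrib_right mult_ac)
  done

lemma lin_factor:
  fixes B :: "'n::finite \<Rightarrow> 'a::finite \<Rightarrow> 'b::finite \<Rightarrow> 'a \<Rightarrow> 'b \<Rightarrow> complex"
  and C :: "'n \<Rightarrow> 'c::finite \<Rightarrow> 'd::finite \<Rightarrow> 'c \<Rightarrow> 'd \<Rightarrow> complex"
  shows "lohe_lin (dmm_kappa \<kappa>1 \<kappa>2) (dmm_A B C) T (\<lambda>k. tprod (U k) (V k)) j a1 a2 a3 a4
   = ulin \<kappa>1 \<kappa>2 B T U j a1 a2 * V j a3 a4 + U j a1 a2 * vlin \<kappa>1 \<kappa>2 C T V j a3 a4"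
  unfolding lohe_lin_def
  apply (simp add: UNIV_bool dmm_kappa_def sel_def A_term T1 T2 T3 T4)
  apply (simp add: ulin_def vlin_def algebra_simps)
  done

lemma W1_prod:
  fixes U :: "'n::finite \<Rightarrow> ('a::finite, 'b::finite) cmat" and V :: "'n \<Rightarrow> ('c::finite, 'd::finite) cmat"
  shows "W1 (\<lambda>k. tprod (U k) (V k)) j a1 b1 = (\<Sum>k\<in>UNIV. mmul (U k) (adj (U j)) a1 b1 * frob (V j) (V k)
            - mmul (U j) (adj (U k)) a1 b1 * frob (V k) (V j)) / of_nat CARD('n)"
proof -
  have "W1 (\<lambda>k. tprod (U k) (V k)) j a1 b1 = (\<Sum>b2\<in>UNIV. \<Sum>b3\<in>UNIV. \<Sum>b4\<in>UNIV. \<Sum>k\<in>UNIV.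
     (U k a1 b2 * cnj (U j b1 b2) * (cnj (V j b3 b4) * V k b3 b4)
      - U j a1 b2 * cnj (U k b1 b2) * (cnj (V k b3 b4) * V j b3 b4)) / of_nat CARD('n))"
    unfolding W1_def tc_def tprod_def
    by (simp add: sum_divide_distrib sum_distrib_right sum_distrib_left sum_subtractf[symmetric] diff_divide_distrib algebra_simps)
  also have "\<dots> = (\<Sum>k\<in>UNIV. \<Sum>b2\<in>UNIV. \<Sum>b3\<in>UNIV. \<Sum>b4\<in>UNIV.
     (U k a1 b2 * cnj (U j b1 b2) * (cnj (V j b3 b4) * V k b3 b4)
      - U j a1 b2 * cnj (U k b1 b2) * (cnj (V k b3 b4) * V j b3 b4)) / of_nat CARD('n))"
    by (rule sum4_rot)
  also have "\<dots> = (\<Sum>k\<in>UNIV. \<Sum>b3\<in>UNIV. \<Sum>b4\<in>UNIV. \<Sum>b2\<in>UNIV.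
     (U k a1 b2 * cnj (U j b1 b2) * (cnj (V j b3 b4) * V k b3 b4)
      - U j a1 b2 * cnj (U k b1 b2) * (cnj (V k b3 b4) * V j b3 b4)) / of_nat CARD('n))"
    by (intro sum.cong refl, subst sum3_rot, subst sum3_rot, rule refl)
  also have "\<dots> = (\<Sum>k\<in>UNIV. mmul (U k) (adj (U j)) a1 b1 * frob (V j) (V k)
            - mmul (U j) (adj (U k)) a1 b1 * frob (V k) (V j)) / of_nat CARD('n)"
    unfolding mmul_def adj_def frob_def
    by (simp add: sum_divide_distrib sum_distrib_right sum_distrib_left sum_subtractf[symmetric] diff_divide_distrib algebra_simps)
  finally show ?thesis .
qed
lemma W2_prod:
  fixes U :: "'n::finite \<Rightarrow> ('a::finite, 'b::finite) cmat" and V :: "'n \<Rightarrow> ('c::finite, 'd::finite) cmat"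
  shows "W2 (\<lambda>k. tprod (U k) (V k)) j b2 a2 = (\<Sum>k\<in>UNIV. mmul (adj (U j)) (U k) b2 a2 * frob (V j) (V k)
            - mmul (adj (U k)) (U j) b2 a2 * frob (V k) (V j)) / of_nat CARD('n)"
proof -
  have "W2 (\<lambda>k. tprod (U k) (V k)) j b2 a2 = (\<Sum>b1\<in>UNIV. \<Sum>b3\<in>UNIV. \<Sum>b4\<in>UNIV. \<Sum>k\<in>UNIV.
     (cnj (U j b1 b2) * U k b1 a2 * (cnj (V j b3 b4) * V k b3 b4)
      - cnj (U k b1 b2) * U j b1 a2 * (cnj (V k b3 b4) * V j b3 b4)) / of_nat CARD('n))"
    unfolding W2_def tc_def tprod_def
    by (simp add: sum_divide_distrib sum_distrib_right sum_distrib_left sum_subtractf[symmetric] diff_divide_distrib algebra_simps)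
  also have "\<dots> = (\<Sum>k\<in>UNIV. \<Sum>b1\<in>UNIV. \<Sum>b3\<in>UNIV. \<Sum>b4\<in>UNIV.
     (cnj (U j b1 b2) * U k b1 a2 * (cnj (V j b3 b4) * V k b3 b4)
      - cnj (U k b1 b2) * U j b1 a2 * (cnj (V k b3 b4) * V j b3 b4)) / of_nat CARD('n))"
    by (rule sum4_rot)
  also have "\<dots> = (\<Sum>k\<in>UNIV. \<Sum>b3\<in>UNIV. \<Sum>b4\<in>UNIV. \<Sum>b1\<in>UNIV.
     (cnj (U j b1 b2) * U k b1 a2 * (cnj (V j b3 b4) * V k b3 b4)
      - cnj (U k b1 b2) * U j b1 a2 * (cnj (V k b3 b4) * V j b3 b4)) / of_nat CARD('n))"
    by (intro sum.cong refl, subst sum3_rot, subst sum3_rot, rule refl)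
  also have "\<dots> = (\<Sum>k\<in>UNIV. mmul (adj (U j)) (U k) b2 a2 * frob (V j) (V k)
            - mmul (adj (U k)) (U j) b2 a2 * frob (V k) (V j)) / of_nat CARD('n)"
    unfolding mmul_def adj_def frob_def
    by (simp add: sum_divide_distrib sum_distrib_right sum_distrib_left sum_subtractf[symmetric] diff_divide_distrib algebra_simps)
  finally show ?thesis .
qed

lemma W3_prod:
  fixes U :: "'n::finite \<Rightarrow> ('a::finite, 'b::finite) cmat" and V :: "'n \<Rightarrow> ('c::finite, 'd::finite) cmat"
  shows "W3 (\<lambda>k. tprod (U k) (V k)) j a3 b3 = (\<Sum>k\<in>UNIV. mmul (V k) (adj (V j)) a3 b3 * frob (U j) (U k)
            - mmul (V j) (adj (V k)) a3 b3 * frob (U k) (U j)) / of_nat CARD('n)"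
proof -
  have "W3 (\<lambda>k. tprod (U k) (V k)) j a3 b3 = (\<Sum>b1\<in>UNIV. \<Sum>b2\<in>UNIV. \<Sum>b4\<in>UNIV. \<Sum>k\<in>UNIV.
     (V k a3 b4 * cnj (V j b3 b4) * (cnj (U j b1 b2) * U k b1 b2)
      - V j a3 b4 * cnj (V k b3 b4) * (cnj (U k b1 b2) * U j b1 b2)) / of_nat CARD('n))"
    unfolding W3_def tc_def tprod_def
    by (simp add: sum_divide_distrib sum_distrib_right sum_distrib_left sum_subtractf[symmetric] diff_divide_distrib algebra_simps)
  also have "\<dots> = (\<Sum>k\<in>UNIV. \<Sum>b1\<in>UNIV. \<Sum>b2\<in>UNIV. \<Sum>b4\<in>UNIV.
     (V k a3 b4 * cnj (V j b3 b4) * (cnj (U j b1 b2) * U k b1 b2)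
      - V j a3 b4 * cnj (V k b3 b4) * (cnj (U k b1 b2) * U j b1 b2)) / of_nat CARD('n))"
    by (rule sum4_rot)
  also have "\<dots> = (\<Sum>k\<in>UNIV. \<Sum>b1\<in>UNIV. \<Sum>b4\<in>UNIV. \<Sum>b2\<in>UNIV.
     (V k a3 b4 * cnj (V j b3 b4) * (cnj (U j b1 b2) * U k b1 b2)
      - V j a3 b4 * cnj (V k b3 b4) * (cnj (U k b1 b2) * U j b1 b2)) / of_nat CARD('n))"
    by (intro sum.cong refl, rule sum.swap)
  also have "\<dots> = (\<Sum>k\<in>UNIV. mmul (V k) (adj (V j)) a3 b3 * frob (U j) (U k)
            - mmul (V j) (adj (V k)) a3 b3 * frob (U k) (U j)) / of_nat CARD('n)"
    unfolding mmul_def adj_def frob_def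
    by (simp add: sum_divide_distrib sum_distrib_right sum_distrib_left sum_subtractf[symmetric] diff_divide_distrib algebra_simps)
  finally show ?thesis .
qed

lemma W4_prod:
  fixes U :: "'n::finite \<Rightarrow> ('a::finite, 'b::finite) cmat" and V :: "'n \<Rightarrow> ('c::finite, 'd::finite) cmat"
  shows "W4 (\<lambda>k. tprod (U k) (V k)) j b4 a4 = (\<Sum>k\<in>UNIV. mmul (adj (V j)) (V k) b4 a4 * frob (U j) (U k)
            - mmul (adj (V k)) (V j) b4 a4 * frob (U k) (U j)) / of_nat CARD('n)"
proof -
  have "W4 (\<lambda>k. tprod (U k) (V k)) j b4 a4 = (\<Sum>b1\<in>UNIV. \<Sum>b2\<in>UNIV. \<Sum>b3\<in>UNIV. \<Sum>k\<in>UNIV.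
     (cnj (V j b3 b4) * V k b3 a4 * (cnj (U j b1 b2) * U k b1 b2)
      - cnj (V k b3 b4) * V j b3 a4 * (cnj (U k b1 b2) * U j b1 b2)) / of_nat CARD('n))"
    unfolding W4_def tc_def tprod_def
    by (simp add: sum_divide_distrib sum_distrib_right sum_distrib_left sum_subtractf[symmetric] diff_divide_distrib algebra_simps)
  also have "\<dots> = (\<Sum>k\<in>UNIV. \<Sum>b1\<in>UNIV. \<Sum>b2\<in>UNIV. \<Sum>b3\<in>UNIV.
     (cnj (V j b3 b4) * V k b3 a4 * (cnj (U j b1 b2) * U k b1 b2)
      - cnj (V k b3 b4) * V j b3 a4 * (cnj (U k b1 b2) * U j b1 b2)) / of_nat CARD('n))"
    by (rule sum4_rot)
  also have "\<dots> = (\<Sum>k\<in>UNIV. \<Sum>b1\<in>UNIV. \<Sum>b3\<in>UNIV. \<Sum>b2\<in>UNIV.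
     (cnj (V j b3 b4) * V k b3 a4 * (cnj (U j b1 b2) * U k b1 b2)
      - cnj (V k b3 b4) * V j b3 a4 * (cnj (U k b1 b2) * U j b1 b2)) / of_nat CARD('n))"
    by (intro sum.cong refl, rule sum.swap)
  also have "\<dots> = (\<Sum>k\<in>UNIV. mmul (adj (V j)) (V k) b4 a4 * frob (U j) (U k)
            - mmul (adj (V k)) (V j) b4 a4 * frob (U k) (U j)) / of_nat CARD('n)"
    unfolding mmul_def adj_def frob_def
    by (simp add: sum_divide_distrib sum_distrib_right sum_distrib_left sum_subtractf[symmetric] diff_divide_distrib algebra_simps)
  finally show ?thesis .
qed

lemma mmul_assoc: "mmul (mmul A B) C = mmul A (mmul (B::('b::finite,'c::finite) cmat) C)"
  unfolding mmul_def
  by (rule ext, rule ext, simp add: sum_distrib_left sum_distrib_right mult_ac, rule sum.swap)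

lemma W_right:
  fixes Z :: "('b::finite, 'c) cmat" and P Q :: "'n \<Rightarrow> ('a, 'b) cmat"
  shows "(\<Sum>b\<in>UNIV. ((\<Sum>k\<in>UNIV. P k a b * c k - Q k a b * d k) / N) * Z b e)
     = (\<Sum>k\<in>UNIV. c k * mmul (P k) Z a e - d k * mmul (Q k) Z a e) / N"
proof -
  have "(\<Sum>b\<in>UNIV. ((\<Sum>k\<in>UNIV. P k a b * c k - Q k a b * d k) / N) * Z b e)
     = (\<Sum>b\<in>UNIV. \<Sum>k\<in>UNIV. (P k a b * c k - Q k a b * d k) * Z b e / N)"
    by (simp add: sum_divide_distrib sum_distrib_right)
  also have "\<dots> = (\<Sum>k\<in>UNIV. \<Sum>b\<in>UNIV. (P k a b * c k - Q k a b * d k) * Z b e / N)"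
    by (rule sum.swap)
  also have "\<dots> = (\<Sum>k\<in>UNIV. c k * mmul (P k) Z a e - d k * mmul (Q k) Z a e) / N"
    unfolding mmul_def
    by (simp add: sum_divide_distrib sum_distrib_right sum_distrib_left sum_subtractf diff_divide_distrib algebra_simps)
  finally show ?thesis .
qed

lemma W_left:
  fixes Z :: "('a, 'b::finite) cmat" and P Q :: "'n \<Rightarrow> ('b, 'c) cmat"
  shows "(\<Sum>b\<in>UNIV. Z a b * ((\<Sum>k\<in>UNIV. P k b e * c k - Q k b e * d k) / N))
     = (\<Sum>k\<in>UNIV. c k * mmul Z (P k) a e - d k * mmul Z (Q k) a e) / N"
proof -
  have "(\<Sum>b\<in>UNIV. Z a b * ((\<Sum>k\<in>UNIV. P k b e * c k - Q k b e * d k) / N))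
     = (\<Sum>b\<in>UNIV. \<Sum>k\<in>UNIV. Z a b * (P k b e * c k - Q k b e * d k) / N)"
    by (simp add: sum_divide_distrib sum_distrib_left)
  also have "\<dots> = (\<Sum>k\<in>UNIV. \<Sum>b\<in>UNIV. Z a b * (P k b e * c k - Q k b e * d k) / N)"
    by (rule sum.swap)
  also have "\<dots> = (\<Sum>k\<in>UNIV. c k * mmul Z (P k) a e - d k * mmul Z (Q k) a e) / N"
    unfolding mmul_def
    by (simp add: sum_divide_distrib sum_distrib_right sum_distrib_left sum_subtractf diff_divide_distrib algebra_simps)
  finally show ?thesis .
qed

lemma ulin_prod:
  fixes U :: "'n::finite \<Rightarrow> ('a::finite, 'b::finite) cmat" and V :: "'n \<Rightarrow> ('c::finite, 'd::finite) cmat"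
  shows "ulin \<kappa>1 \<kappa>2 B (\<lambda>k. tprod (U k) (V k)) U j = dmm_rhs \<kappa>1 \<kappa>2 B U V j"
proof -
  have k1: "(\<Sum>b1\<in>UNIV. W1 (\<lambda>k. tprod (U k) (V k)) j a1 b1 * U j b1 a2) = (\<Sum>k\<in>UNIV.
      frob (V j) (V k) * mmul (mmul (U k) (adj (U j))) (U j) a1 a2
    - frob (V k) (V j) * mmul (mmul (U j) (adj (U k))) (U j) a1 a2) / of_nat CARD('n)" for a1 a2
    unfolding W1_prod using W_right[where P="\<lambda>k. mmul (U k) (adj (U j))" and Q="\<lambda>k. mmul (U j) (adj (U k))"
      and c="\<lambda>k. frob (V j) (V k)" and d="\<lambda>k. frob (V k) (V j)" and Z="U j"] by simp
  have k2: "(\<Sum>b2\<in>UNIV. U j a1 b2 * W2 (\<lambda>k. tprod (U k) (V k)) j b2 a2) = (\<Sum>k\<in>UNIV.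
      frob (V j) (V k) * mmul (mmul (U j) (adj (U j))) (U k) a1 a2
    - frob (V k) (V j) * mmul (mmul (U j) (adj (U k))) (U j) a1 a2) / of_nat CARD('n)" for a1 a2
    unfolding W2_prod using W_left[where P="\<lambda>k. mmul (adj (U j)) (U k)" and Q="\<lambda>k. mmul (adj (U k)) (U j)"
      and c="\<lambda>k. frob (V j) (V k)" and d="\<lambda>k. frob (V k) (V j)" and Z="U j"] by (simp add: mmul_assoc)
  show ?thesis unfolding ulin_def dmm_rhs_def k1 k2 by simp
qed

lemma vlin_prod:
  fixes U :: "'n::finite \<Rightarrow> ('a::finite, 'b::finite) cmat" and V :: "'n \<Rightarrow> ('c::finite, 'd::finite) cmat"
  shows "vlin \<kappa>1 \<kappa>2 C (\<lambda>k. tprod (U k) (V k)) V j = dmm_rhs \<kappa>1 \<kappa>2 C V U j"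
proof -
  have k1: "(\<Sum>b1\<in>UNIV. W3 (\<lambda>k. tprod (U k) (V k)) j a1 b1 * V j b1 a2) = (\<Sum>k\<in>UNIV.
      frob (U j) (U k) * mmul (mmul (V k) (adj (V j))) (V j) a1 a2
    - frob (U k) (U j) * mmul (mmul (V j) (adj (V k))) (V j) a1 a2) / of_nat CARD('n)" for a1 a2
    unfolding W3_prod using W_right[where P="\<lambda>k. mmul (V k) (adj (V j))" and Q="\<lambda>k. mmul (V j) (adj (V k))"
      and c="\<lambda>k. frob (U j) (U k)" and d="\<lambda>k. frob (U k) (U j)" and Z="V j"] by simp
  have k2: "(\<Sum>b2\<in>UNIV. V j a1 b2 * W4 (\<lambda>k. tprod (U k) (V k)) j b2 a2) = (\<Sum>k\<in>UNIV.
      frob (U j) (U k) * mmul (mmul (V j) (adj (V j))) (V k) a1 a2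
    - frob (U k) (U j) * mmul (mmul (V j) (adj (V k))) (V j) a1 a2) / of_nat CARD('n)" for a1 a2
    unfolding W4_prod using W_left[where P="\<lambda>k. mmul (adj (V j)) (V k)" and Q="\<lambda>k. mmul (adj (V k)) (V j)"
      and c="\<lambda>k. frob (U j) (U k)" and d="\<lambda>k. frob (U k) (U j)" and Z="V j"] by (simp add: mmul_assoc)
  show ?thesis unfolding vlin_def dmm_rhs_def k1 k2 by simp
qed


lemma sum_pairswap: "(\<Sum>x\<in>A. \<Sum>y\<in>B. \<Sum>z\<in>C. \<Sum>w\<in>D. f x y z w) = (\<Sum>z\<in>C. \<Sum>w\<in>D. \<Sum>x\<in>A. \<Sum>y\<in>B. f x y z w)"
proof -
  have "(\<Sum>x\<in>A. \<Sum>y\<in>B. \<Sum>z\<in>C. \<Sum>w\<in>D. f x y z w) = (\<Sum>x\<in>A. \<Sum>z\<in>C. \<Sum>w\<in>D. \<Sum>y\<in>B. f x y z w)"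
  proof (rule sum.cong[OF refl])
    fix x
    have "(\<Sum>y\<in>B. \<Sum>z\<in>C. \<Sum>w\<in>D. f x y z w) = (\<Sum>z\<in>C. \<Sum>y\<in>B. \<Sum>w\<in>D. f x y z w)" by (rule sum.swap)
    also have "\<dots> = (\<Sum>z\<in>C. \<Sum>w\<in>D. \<Sum>y\<in>B. f x y z w)" by (rule sum.cong[OF refl], rule sum.swap)
    finally show "(\<Sum>y\<in>B. \<Sum>z\<in>C. \<Sum>w\<in>D. f x y z w) = (\<Sum>z\<in>C. \<Sum>w\<in>D. \<Sum>y\<in>B. f x y z w)" .
  qed
  also have "\<dots> = (\<Sum>z\<in>C. \<Sum>x\<in>A. \<Sum>w\<in>D. \<Sum>y\<in>B. f x y z w)" by (rule sum.swap)
  also have "\<dots> = (\<Sum>z\<in>C. \<Sum>w\<in>D. \<Sum>x\<in>A. \<Sum>y\<in>B. f x y z w)" by (rule sum.cong[OF refl], rule sum.swap)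
  finally show ?thesis .
qed

lemma sum_swap13: "(\<Sum>x\<in>A. \<Sum>y\<in>B. \<Sum>z\<in>C. \<Sum>w\<in>D. f x y z w) = (\<Sum>z\<in>C. \<Sum>y\<in>B. \<Sum>x\<in>A. \<Sum>w\<in>D. f x y z w)"
proof -
  have "(\<Sum>x\<in>A. \<Sum>y\<in>B. \<Sum>z\<in>C. \<Sum>w\<in>D. f x y z w) = (\<Sum>x\<in>A. \<Sum>z\<in>C. \<Sum>y\<in>B. \<Sum>w\<in>D. f x y z w)"
    by (rule sum.cong[OF refl], rule sum.swap)
  also have "\<dots> = (\<Sum>z\<in>C. \<Sum>x\<in>A. \<Sum>y\<in>B. \<Sum>w\<in>D. f x y z w)" by (rule sum.swap)
  also have "\<dots> = (\<Sum>z\<in>C. \<Sum>y\<in>B. \<Sum>x\<in>A. \<Sum>w\<in>D. f x y z w)" by (rule sum.cong[OF refl], rule sum.swap)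
  finally show ?thesis .
qed

lemma frob_cnj: "cnj (frob A B) = frob B A"
  unfolding frob_def by (simp add: mult.commute)

lemma frob_add: "frob A (\<lambda>a b. X a b + Y a b) = frob A X + frob A Y"
  unfolding frob_def by (simp add: distrib_left sum.distrib)
lemma frob_diff: "frob A (\<lambda>a b. X a b - Y a b) = frob A X - frob A Y"
  unfolding frob_def by (simp add: right_diff_distrib sum_subtractf)
lemma frob_scale: "frob A (\<lambda>a b. c * X a b) = c * frob A X"
  unfolding frob_def by (simp add: sum_distrib_left mult_ac)
lemma frob_div: "frob A (\<lambda>a b. X a b / c) = frob A X / c"
  unfolding frob_def by (simp add: sum_divide_distrib)
lemma frob_sum: "frob A (\<lambda>a b. \<Sum>k\<in>S. X k a b) = (\<Sum>k\<in>S. frob A (X k))"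
  unfolding frob_def by (simp add: sum_distrib_left) (subst sum.swap, rule sum.cong[OF refl], rule sum.swap)

lemma claim1:
  fixes A B :: "('a::finite, 'b::finite) cmat"
  shows "frob A (mmul (mmul A (adj B)) A) = cnj (frob A (mmul (mmul B (adj A)) A))"
proof -
  have "cnj (frob A (mmul (mmul B (adj A)) A)) = (\<Sum>i\<in>UNIV. \<Sum>l\<in>UNIV. \<Sum>m\<in>UNIV. \<Sum>n\<in>UNIV.
     A i l * cnj (B i n) * A m n * cnj (A m l))"
    unfolding frob_def mmul_def adj_def by (simp add: sum_distrib_left sum_distrib_right mult_ac)
  also have "\<dots> = (\<Sum>m\<in>UNIV. \<Sum>l\<in>UNIV. \<Sum>i\<in>UNIV. \<Sum>n\<in>UNIV.
     A i l * cnj (B i n) * A m n * cnj (A m l))"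
    by (rule sum_swap13)
  also have "\<dots> = frob A (mmul (mmul A (adj B)) A)"
    unfolding frob_def mmul_def adj_def by (simp add: sum_distrib_left sum_distrib_right mult_ac)
  finally show ?thesis by simp
qed

lemma claim2:
  fixes A B :: "('a::finite, 'b::finite) cmat"
  shows "frob A (mmul (mmul A (adj A)) B) = frob A (mmul (mmul B (adj A)) A)"
proof -
  have "frob A (mmul (mmul B (adj A)) A) = (\<Sum>i\<in>UNIV. \<Sum>l\<in>UNIV. \<Sum>m\<in>UNIV. \<Sum>n\<in>UNIV.
     cnj (A i l) * B i n * cnj (A m n) * A m l)"
    unfolding frob_def mmul_def adj_def by (simp add: sum_distrib_left sum_distrib_right mult_ac)
  also have "\<dots> = (\<Sum>m\<in>UNIV. \<Sum>n\<in>UNIV. \<Sum>i\<in>UNIV. \<Sum>l\<in>UNIV.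
     cnj (A i l) * B i n * cnj (A m n) * A m l)"
    by (rule sum_pairswap)
  also have "\<dots> = frob A (mmul (mmul A (adj A)) B)"
    unfolding frob_def mmul_def adj_def by (simp add: sum_distrib_left sum_distrib_right mult_ac)
  finally show ?thesis by simp
qed

lemma claimB:
  fixes A :: "('a::finite, 'b::finite) cmat"
  assumes "\<And>a1 b1 a2 b2. Bj a1 b1 a2 b2 = - cnj (Bj a2 b2 a1 b1)"
  shows "Re (frob A (\<lambda>a1 a2. \<Sum>b1\<in>UNIV. \<Sum>b2\<in>UNIV. Bj a1 a2 b1 b2 * A b1 b2)) = 0"
proof -
  let ?Z = "frob A (\<lambda>a1 a2. \<Sum>b1\<in>UNIV. \<Sum>b2\<in>UNIV. Bj a1 a2 b1 b2 * A b1 b2)"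
  have "cnj ?Z = (\<Sum>a1\<in>UNIV. \<Sum>a2\<in>UNIV. \<Sum>b1\<in>UNIV. \<Sum>b2\<in>UNIV. - (A a1 a2 * Bj b1 b2 a1 a2 * cnj (A b1 b2)))"
    unfolding frob_def by (subst (2) assms) (simp add: sum_distrib_left mult_ac)
  also have "\<dots> = (\<Sum>b1\<in>UNIV. \<Sum>b2\<in>UNIV. \<Sum>a1\<in>UNIV. \<Sum>a2\<in>UNIV. - (A a1 a2 * Bj b1 b2 a1 a2 * cnj (A b1 b2)))"
    by (rule sum_pairswap)
  also have "\<dots> = - ?Z"
    unfolding frob_def by (simp add: sum_distrib_left mult_ac sum_negf)
  finally have "cnj ?Z = - ?Z" .
  then have "Re (cnj ?Z) = Re (- ?Z)" by simp
  then show ?thesis by simp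
qed

lemma Re_sum_anti: "Re (\<Sum>k\<in>S. F k * X k - cnj (F k) * cnj (X k)) = 0"
  by (simp add: Re_sum)

lemma dmm_rhs_norm:
  fixes U :: "'n::finite \<Rightarrow> ('a::finite, 'b::finite) cmat" and V :: "'n \<Rightarrow> ('c::finite, 'd::finite) cmat"
  assumes "\<And>j a1 b1 a2 b2. B j a1 b1 a2 b2 = - cnj (B j a2 b2 a1 b1)"
  shows "Re (frob (U j) (dmm_rhs \<kappa>1 \<kappa>2 B U V j)) = 0"
proof -
  define X where "X k = frob (U j) (mmul (mmul (U k) (adj (U j))) (U j))" for k
  define F where "F k = frob (V j) (V k)" for k
  have "frob (U j) (dmm_rhs \<kappa>1 \<kappa>2 B U V j) =
     frob (U j) (\<lambda>a1 a2. \<Sum>b1\<in>UNIV. \<Sum>b2\<in>UNIV. B j a1 a2 b1 b2 * U j b1 b2)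
     + complex_of_real \<kappa>1 / of_nat CARD('n) * (\<Sum>k\<in>UNIV. frob (V j) (V k) * frob (U j) (mmul (mmul (U k) (adj (U j))) (U j))
          - frob (V k) (V j) * frob (U j) (mmul (mmul (U j) (adj (U k))) (U j)))
     + complex_of_real \<kappa>2 / of_nat CARD('n) * (\<Sum>k\<in>UNIV. frob (V j) (V k) * frob (U j) (mmul (mmul (U j) (adj (U j))) (U k))
          - frob (V k) (V j) * frob (U j) (mmul (mmul (U j) (adj (U k))) (U j)))"
    unfolding dmm_rhs_def by (simp only: frob_add frob_scale frob_sum frob_diff)
  also have "\<dots> = frob (U j) (\<lambda>a1 a2. \<Sum>b1\<in>UNIV. \<Sum>b2\<in>UNIV. B j a1 a2 b1 b2 * U j b1 b2)
     + complex_of_real \<kappa>1 / of_nat CARD('n) * (\<Sum>k\<in>UNIV. F k * X k - cnj (F k) * cnj (X k))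
     + complex_of_real \<kappa>2 / of_nat CARD('n) * (\<Sum>k\<in>UNIV. F k * X k - cnj (F k) * cnj (X k))"
    unfolding X_def F_def claim2 by (simp add: frob_cnj claim1[of "U j"])
  finally have eq: "frob (U j) (dmm_rhs \<kappa>1 \<kappa>2 B U V j) = \<dots>" .
  have r0: "Re (frob (U j) (\<lambda>a1 a2. \<Sum>b1\<in>UNIV. \<Sum>b2\<in>UNIV. B j a1 a2 b1 b2 * U j b1 b2)) = 0"
    by (rule claimB) (rule assms)
  have rc: "Re (complex_of_real c / of_nat N * z) = c / N * Re z" for c N z
    by (simp add: Re_divide_of_nat)
  show ?thesis unfolding eq using r0 by (simp only: plus_complex.sel rc Re_sum_anti)
qed



lemma sum_UNIV_triple: "(\<Sum>p\<in>UNIV. g p) = (\<Sum>k\<in>UNIV. \<Sum>b1\<in>UNIV. \<Sum>b2\<in>UNIV. g (k, b1, b2))"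
  for g :: "('k::finite \<times> 'b1::finite \<times> 'b2::finite) \<Rightarrow> complex"
  by (simp add: sum.cartesian_product flip: UNIV_Times_UNIV)

definition umat where
  "umat \<kappa>1 \<kappa>2 B T = (\<lambda>(j, a1, a2) (k, b1, b2). if k = j then B j a1 a2 b1 b2
      + complex_of_real \<kappa>1 * (if b2 = a2 then W1 T j a1 b1 else 0)
      + complex_of_real \<kappa>2 * (if b1 = a1 then W2 T j b2 a2 else 0) else 0)"

definition vmat where
  "vmat \<kappa>1 \<kappa>2 C T = (\<lambda>(j, a3, a4) (k, b3, b4). if k = j then C j a3 a4 b3 b4
      + complex_of_real \<kappa>1 * (if b4 = a4 then W3 T j a3 b3 else 0)
      + complex_of_real \<kappa>2 * (if b3 = a3 then W4 T j b4 a4 else 0) else 0)"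

lemma ulin_mat:
  fixes B :: "'n::finite \<Rightarrow> 'a::finite \<Rightarrow> 'b::finite \<Rightarrow> 'a \<Rightarrow> 'b \<Rightarrow> complex"
  shows "ulin \<kappa>1 \<kappa>2 B T U j a1 a2 = (\<Sum>p\<in>UNIV. umat \<kappa>1 \<kappa>2 B T (j, a1, a2) p * (case p of (k, b1, b2) \<Rightarrow> U k b1 b2))"
  unfolding sum_UNIV_triple umat_def ulin_def
  by (simp add: delta_simps distrib_left distrib_right sum.distrib) (simp add: sum_distrib_left mult_ac)

lemma vlin_mat:
  fixes C :: "'n::finite \<Rightarrow> 'a::finite \<Rightarrow> 'b::finite \<Rightarrow> 'a \<Rightarrow> 'b \<Rightarrow> complex"
  shows "vlin \<kappa>1 \<kappa>2 C T V j a3 a4 = (\<Sum>p\<in>UNIV. vmat \<kappa>1 \<kappa>2 C T (j, a3, a4) p * (case p of (k, b3, b4) \<Rightarrow> V k b3 b4))"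
  unfolding sum_UNIV_triple vmat_def vlin_def
  by (simp add: delta_simps distrib_left distrib_right sum.distrib) (simp add: sum_distrib_left mult_ac)

lemma lohe_lin_add:
  fixes T :: "'n::finite \<Rightarrow> ('a::finite, 'b::finite, 'c::finite, 'd::finite) tensor4"
  shows "lohe_lin \<kappa> A T (\<lambda>k b1 b2 b3 b4. X k b1 b2 b3 b4 + Y k b1 b2 b3 b4) j a1 a2 a3 a4
    = lohe_lin \<kappa> A T X j a1 a2 a3 a4 + lohe_lin \<kappa> A T Y j a1 a2 a3 a4"
  unfolding lohe_lin_def
  by (simp add: distrib_left distrib_right sum.distrib diff_add_eq add_diff_eq sum_subtractf algebra_simps)

lemma lohe_lin_scale:
  fixes T :: "'n::finite \<Rightarrow> ('a::finite, 'b::finite, 'c::finite, 'd::finite) tensor4"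
  shows "lohe_lin \<kappa> A T (\<lambda>k b1 b2 b3 b4. c * X k b1 b2 b3 b4) j a1 a2 a3 a4
    = c * lohe_lin \<kappa> A T X j a1 a2 a3 a4"
  unfolding lohe_lin_def
  by (simp add: distrib_left sum_distrib_left right_diff_distrib sum_subtractf mult_ac)

lemma lin_expand:
  fixes F :: "('i::finite \<Rightarrow> complex) \<Rightarrow> complex"
  assumes add: "\<And>x y. F (\<lambda>q. x q + y q) = F x + F y"
    and scal: "\<And>c x. F (\<lambda>q. c * x q) = c * F x"
  shows "F x = (\<Sum>p\<in>UNIV. x p * F (\<lambda>q. if q = p then 1 else 0))"
proof -
  have F0: "F (\<lambda>q. 0) = 0" using scal[of 0 x] by simp
  have ind: "F (\<lambda>q. \<Sum>p\<in>S. x p * (if q = p then 1 else 0)) = (\<Sum>p\<in>S. x p * F (\<lambda>q. if q = p then 1 else 0))"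
    if "finite S" for S
    using that
  proof (induction S rule: finite_induct)
    case empty
    then show ?case using F0 by simp
  next
    case (insert p S)
    have "F (\<lambda>q. \<Sum>p'\<in>insert p S. x p' * (if q = p' then 1 else 0))
        = F (\<lambda>q. x p * (if q = p then 1 else 0) + (\<Sum>p'\<in>S. x p' * (if q = p' then 1 else 0)))"
      using insert by simp
    also have "\<dots> = x p * F (\<lambda>q. if q = p then 1 else 0) + F (\<lambda>q. \<Sum>p'\<in>S. x p' * (if q = p' then 1 else 0))"
      by (simp only: add scal)
    finally show ?case using insert by simp
  qed
  have e: "(\<lambda>q. \<Sum>p\<in>UNIV. x p * (if q = p then 1 else 0)) = x"
    by (rule ext) (simp add: mult_if0)
  have "F x = F (\<lambda>q. \<Sum>p\<in>UNIV. x p * (if q = p then 1 else 0))" by (simp only: e)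
  also have "\<dots> = (\<Sum>p\<in>UNIV. x p * F (\<lambda>q. if q = p then 1 else 0))" by (rule ind) simp
  finally show ?thesis .
qed

definition lmat where
  "lmat \<kappa> A T = (\<lambda>(j, a1, a2, a3, a4) p. lohe_lin \<kappa> A T
      (\<lambda>k b1 b2 b3 b4. if (k, b1, b2, b3, b4) = p then 1 else 0) j a1 a2 a3 a4)"

lemma lohe_lin_mat:
  fixes T :: "'n::finite \<Rightarrow> ('a::finite, 'b::finite, 'c::finite, 'd::finite) tensor4"
  shows "lohe_lin \<kappa> A T S j a1 a2 a3 a4 = (\<Sum>p\<in>UNIV. lmat \<kappa> A T (j, a1, a2, a3, a4) p *
      (case p of (k, b1, b2, b3, b4) \<Rightarrow> S k b1 b2 b3 b4))"
proof -
  define F where "F x = lohe_lin \<kappa> A T (\<lambda>k b1 b2 b3 b4. x (k, b1, b2, b3, b4)) j a1 a2 a3 a4"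
    for x :: "'n \<times> 'a \<times> 'b \<times> 'c \<times> 'd \<Rightarrow> complex"
  have "F (\<lambda>p. case p of (k, b1, b2, b3, b4) \<Rightarrow> S k b1 b2 b3 b4)
      = (\<Sum>p\<in>UNIV. (case p of (k, b1, b2, b3, b4) \<Rightarrow> S k b1 b2 b3 b4) * F (\<lambda>q. if q = p then 1 else 0))"
    by (rule lin_expand) (simp_all add: F_def lohe_lin_add lohe_lin_scale)
  then show ?thesis by (simp add: F_def lmat_def mult.commute)
qed

lemma lohe_lin_diff:
  fixes T :: "'n::finite \<Rightarrow> ('a::finite, 'b::finite, 'c::finite, 'd::finite) tensor4"
  shows "lohe_lin \<kappa> A T X j a1 a2 a3 a4 - lohe_lin \<kappa> A T Y j a1 a2 a3 a4
    = lohe_lin \<kappa> A T (\<lambda>k b1 b2 b3 b4. X k b1 b2 b3 b4 - Y k b1 b2 b3 b4) j a1 a2 a3 a4"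
  using lohe_lin_add[of \<kappa> A T "\<lambda>k b1 b2 b3 b4. X k b1 b2 b3 b4 - Y k b1 b2 b3 b4" Y j a1 a2 a3 a4]
  by simp


lemma frob_const:
  fixes X :: "real \<Rightarrow> ('a::finite, 'b::finite) cmat"
  assumes d: "\<And>t a b. 0 \<le> t \<Longrightarrow> ((\<lambda>s. X s a b) has_vector_derivative D t a b) (at t within {0..})"
    and z: "\<And>t. 0 \<le> t \<Longrightarrow> Re (frob (X t) (D t)) = 0" and t: "0 \<le> t"
  shows "Re (frob (X t) (X t)) = Re (frob (X 0) (X 0))"
proof -
  define f where "f s = Re (frob (X s) (X s))" for s
  have fd: "(f has_real_derivative 0) (at s within {0..})" if s: "0 \<le> s" for s
  proof -
    have "((\<lambda>s. frob (X s) (X s)) has_vector_derivative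
        (\<Sum>a\<in>UNIV. \<Sum>b\<in>UNIV. cnj (X s a b) * D s a b + cnj (D s a b) * X s a b)) (at s within {0..})"
      unfolding frob_def by (intro derivative_intros d s)
    moreover have "(\<Sum>a\<in>UNIV. \<Sum>b\<in>UNIV. cnj (X s a b) * D s a b + cnj (D s a b) * X s a b)
        = frob (X s) (D s) + cnj (frob (X s) (D s))"
      unfolding frob_cnj unfolding frob_def by (simp add: sum.distrib)
    ultimately have "((\<lambda>s. frob (X s) (X s)) has_vector_derivative
        frob (X s) (D s) + cnj (frob (X s) (D s))) (at s within {0..})" by simp
    then have "(f has_real_derivative Re (frob (X s) (D s) + cnj (frob (X s) (D s)))) (at s within {0..})"
      unfolding f_def has_vector_derivative_complex_iff by simp
    then show ?thesis using z[OF s] by simp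
  qed
  have fc: "continuous_on {0..t} f"
  proof -
    have "continuous_on {0..} f"
      using fd by (auto simp: continuous_on_eq_continuous_within intro: DERIV_continuous)
    then show ?thesis by (rule continuous_on_subset) auto
  qed
  have int: "DERIV f x :> 0" if "0 < x" for x
  proof -
    have "at x within {0..} = at x" by (rule at_within_interior) (use that in auto)
    then show ?thesis using fd[of x] that by simp
  qed
  have "f 0 \<le> f t"
    by (rule DERIV_nonneg_imp_increasing_open[OF t _ fc]) (use int in auto)
  moreover have "f 0 \<ge> f t"
    by (rule DERIV_nonpos_imp_decreasing_open[OF t _ fc]) (use int in auto)
  ultimately show ?thesis unfolding f_def by simp
qed

theorem proposition3p1:
  fixes \<kappa>1 \<kappa>2 :: real
    and B :: "'n::finite \<Rightarrow> 'a1::finite \<Rightarrow> 'a2::finite \<Rightarrow> 'a1 \<Rightarrow> 'a2 \<Rightarrow> complex"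
    and C :: "'n \<Rightarrow> 'a3::finite \<Rightarrow> 'a4::finite \<Rightarrow> 'a3 \<Rightarrow> 'a4 \<Rightarrow> complex"
  assumes "\<kappa>1 \<ge> 0" and "\<kappa>2 \<ge> 0"
    and "\<And>j a1 b1 a2 b2. B j a1 b1 a2 b2 = - cnj (B j a2 b2 a1 b1)"
    and "\<And>j c1 d1 c2 d2. C j c1 d1 c2 d2 = - cnj (C j c2 d2 c1 d1)"
  shows
    "(\<forall>(U :: 'n \<Rightarrow> real \<Rightarrow> ('a1, 'a2) cmat) (V :: 'n \<Rightarrow> real \<Rightarrow> ('a3, 'a4) cmat).
        is_dmm_solution \<kappa>1 \<kappa>2 B C U V \<longrightarrow>
        is_lohe_solution (dmm_kappa \<kappa>1 \<kappa>2) (dmm_A B C) (\<lambda>j t. tprod (U j t) (V j t)))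
   \<and> (\<forall>(T :: 'n \<Rightarrow> real \<Rightarrow> ('a1, 'a2, 'a3, 'a4) tensor4) U0 V0.
        is_lohe_solution (dmm_kappa \<kappa>1 \<kappa>2) (dmm_A B C) T
        \<and> (\<forall>j. T j 0 = tprod (U0 j) (V0 j))
        \<and> (\<forall>j. frob_norm (U0 j) = 1 \<and> frob_norm (V0 j) = 1)
        \<longrightarrow> (\<exists>U V. is_dmm_solution \<kappa>1 \<kappa>2 B C U V
                  \<and> (\<forall>j. U j 0 = U0 j \<and> V j 0 = V0 j)
                  \<and> (\<forall>j t. t > 0 \<longrightarrow> frob_norm (U j t) = 1 \<and> frob_norm (V j t) = 1
                                      \<and> T j t = tprod (U j t) (V j t))))"
proof -
  have part1: "\<forall>(U :: 'n \<Rightarrow> real \<Rightarrow> ('a1, 'a2) cmat) (V :: 'n \<Rightarrow> real \<Rightarrow> ('a3, 'a4) cmat).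
        is_dmm_solution \<kappa>1 \<kappa>2 B C U V \<longrightarrow>
        is_lohe_solution (dmm_kappa \<kappa>1 \<kappa>2) (dmm_A B C) (\<lambda>j t. tprod (U j t) (V j t))"
  proof (intro allI impI)
    fix U :: "'n \<Rightarrow> real \<Rightarrow> ('a1, 'a2) cmat" and V :: "'n \<Rightarrow> real \<Rightarrow> ('a3, 'a4) cmat"
    assume sol: "is_dmm_solution \<kappa>1 \<kappa>2 B C U V"
    show "is_lohe_solution (dmm_kappa \<kappa>1 \<kappa>2) (dmm_A B C) (\<lambda>j t. tprod (U j t) (V j t))"
      unfolding is_lohe_solution_def
    proof (intro allI impI)
      fix j t a1 a2 a3 a4
      assume t: "0 \<le> (t::real)"
      have dU: "((\<lambda>s. U j s a1 a2) has_vector_derivative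
          dmm_rhs \<kappa>1 \<kappa>2 B (\<lambda>k. U k t) (\<lambda>k. V k t) j a1 a2) (at t within {0..})"
        using sol t unfolding is_dmm_solution_def by blast
      have dV: "((\<lambda>s. V j s a3 a4) has_vector_derivative
          dmm_rhs \<kappa>1 \<kappa>2 C (\<lambda>k. V k t) (\<lambda>k. U k t) j a3 a4) (at t within {0..})"
        using sol t unfolding is_dmm_solution_def by blast
      have d: "((\<lambda>s. U j s a1 a2 * V j s a3 a4) has_vector_derivative
          U j t a1 a2 * dmm_rhs \<kappa>1 \<kappa>2 C (\<lambda>k. V k t) (\<lambda>k. U k t) j a3 a4
          + dmm_rhs \<kappa>1 \<kappa>2 B (\<lambda>k. U k t) (\<lambda>k. V k t) j a1 a2 * V j t a3 a4) (at t within {0..})"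
        by (rule has_vector_derivative_mult[OF dU dV])
      have e: "lohe_rhs (dmm_kappa \<kappa>1 \<kappa>2) (dmm_A B C) (\<lambda>k. tprod (U k t) (V k t)) j a1 a2 a3 a4
          = U j t a1 a2 * dmm_rhs \<kappa>1 \<kappa>2 C (\<lambda>k. V k t) (\<lambda>k. U k t) j a3 a4
          + dmm_rhs \<kappa>1 \<kappa>2 B (\<lambda>k. U k t) (\<lambda>k. V k t) j a1 a2 * V j t a3 a4"
        unfolding lohe_rhs_lin
        using lin_factor[where T="\<lambda>k. tprod (U k t) (V k t)" and U="\<lambda>k. U k t" and V="\<lambda>k. V k t" and B=B and C=C]
          ulin_prod[where U="\<lambda>k. U k t" and V="\<lambda>k. V k t" and B=B]
          vlin_prod[where U="\<lambda>k. U k t" and V="\<lambda>k. V k t" and C=C]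
        by (simp add: add.commute)
      show "((\<lambda>s. tprod (U j s) (V j s) a1 a2 a3 a4) has_vector_derivative
          lohe_rhs (dmm_kappa \<kappa>1 \<kappa>2) (dmm_A B C) (\<lambda>k. tprod (U k t) (V k t)) j a1 a2 a3 a4) (at t within {0..})"
        unfolding e unfolding tprod_def using d by simp
    qed
  qed
  have part2: "\<forall>(T :: 'n \<Rightarrow> real \<Rightarrow> ('a1, 'a2, 'a3, 'a4) tensor4) U0 V0.
        is_lohe_solution (dmm_kappa \<kappa>1 \<kappa>2) (dmm_A B C) T
        \<and> (\<forall>j. T j 0 = tprod (U0 j) (V0 j))
        \<and> (\<forall>j. frob_norm (U0 j) = 1 \<and> frob_norm (V0 j) = 1)
        \<longrightarrow> (\<exists>U V. is_dmm_solution \<kappa>1 \<kappa>2 B C U V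
                  \<and> (\<forall>j. U j 0 = U0 j \<and> V j 0 = V0 j)
                  \<and> (\<forall>j t. t > 0 \<longrightarrow> frob_norm (U j t) = 1 \<and> frob_norm (V j t) = 1
                                      \<and> T j t = tprod (U j t) (V j t)))"
  proof (intro allI impI)
    fix T :: "'n \<Rightarrow> real \<Rightarrow> ('a1, 'a2, 'a3, 'a4) tensor4" and U0 :: "'n \<Rightarrow> ('a1, 'a2) cmat"
      and V0 :: "'n \<Rightarrow> ('a3, 'a4) cmat"
    assume H: "is_lohe_solution (dmm_kappa \<kappa>1 \<kappa>2) (dmm_A B C) T
        \<and> (\<forall>j. T j 0 = tprod (U0 j) (V0 j))
        \<and> (\<forall>j. frob_norm (U0 j) = 1 \<and> frob_norm (V0 j) = 1)"
    have Td: "((\<lambda>s. T j s a1 a2 a3 a4) has_vector_derivative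
        lohe_rhs (dmm_kappa \<kappa>1 \<kappa>2) (dmm_A B C) (\<lambda>k. T k t) j a1 a2 a3 a4) (at t within {0..})"
      if "0 \<le> t" for j t a1 a2 a3 a4
      using H that unfolding is_lohe_solution_def by blast
    have T0: "T j 0 = tprod (U0 j) (V0 j)" for j using H by blast
    have N0: "frob_norm (U0 j) = 1" "frob_norm (V0 j) = 1" for j using H by blast+
    have Tc: "continuous_on UNIV (\<lambda>t. T j (max 0 t) a1 a2 a3 a4)" for j a1 a2 a3 a4
    proof -
      have "continuous_on {0..} (\<lambda>s. T j s a1 a2 a3 a4)"
        by (rule cont_Ici_from_deriv[OF Td])
      then show ?thesis
        by (rule continuous_on_compose2[of _ _ _ "\<lambda>t. max 0 t"]) (auto intro!: continuous_intros)
    qed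
    define Tm where "Tm t = (\<lambda>k. T k (max 0 t))" for t
    have Tm_eq: "Tm t = (\<lambda>k. T k t)" if "0 \<le> t" for t
      using that by (simp add: Tm_def max_absorb2)
    define mU where "mU t = umat \<kappa>1 \<kappa>2 B (Tm t)" for t
    define mV where "mV t = vmat \<kappa>1 \<kappa>2 C (Tm t)" for t
    define mL where "mL t = lmat (dmm_kappa \<kappa>1 \<kappa>2) (dmm_A B C) (Tm t)" for t
    have cmU: "continuous_on UNIV (\<lambda>t. mU t i p)" for i p
    proof -
      obtain j a1 a2 where i: "i = (j, a1, a2)" by (cases i) auto
      obtain k b1 b2 where p: "p = (k, b1, b2)" by (cases p) auto
      show ?thesis unfolding i p mU_def umat_def Tm_def W1_def W2_def tc_def
        by (cases "k = j"; cases "b2 = a2"; cases "b1 = a1") (auto intro!: continuous_intros Tc)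
    qed
    have cmV: "continuous_on UNIV (\<lambda>t. mV t i p)" for i p
    proof -
      obtain j a1 a2 where i: "i = (j, a1, a2)" by (cases i) auto
      obtain k b1 b2 where p: "p = (k, b1, b2)" by (cases p) auto
      show ?thesis unfolding i p mV_def vmat_def Tm_def W3_def W4_def tc_def
        by (cases "k = j"; cases "b2 = a2"; cases "b1 = a1") (auto intro!: continuous_intros Tc)
    qed
    have cmL: "continuous_on UNIV (\<lambda>t. mL t i p)" for i p
    proof -
      obtain j a1 a2 a3 a4 where i: "i = (j, a1, a2, a3, a4)" by (cases i) auto
      show ?thesis unfolding i mL_def lmat_def lohe_lin_def Tm_def tc_def
        by (auto intro!: continuous_intros Tc)
    qed
    obtain xU where xU0: "xU 0 = (\<lambda>(k, b1, b2). U0 k b1 b2)"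
      and xUd: "\<forall>t\<ge>0. \<forall>i. ((\<lambda>s. xU s i) has_vector_derivative
            (\<Sum>p\<in>UNIV. mU t i p * xU t p)) (at t within {0..})"
      using lin_ode_exists[of mU, OF cmU] by blast
    obtain xV where xV0: "xV 0 = (\<lambda>(k, b1, b2). V0 k b1 b2)"
      and xVd: "\<forall>t\<ge>0. \<forall>i. ((\<lambda>s. xV s i) has_vector_derivative
            (\<Sum>p\<in>UNIV. mV t i p * xV t p)) (at t within {0..})"
      using lin_ode_exists[of mV, OF cmV] by blast
    define U where "U k s b1 b2 = xU s (k, b1, b2)" for k s b1 b2
    define V where "V k s b1 b2 = xV s (k, b1, b2)" for k s b1 b2
    have U0: "U j 0 = U0 j" for j by (intro ext) (simp add: U_def xU0)
    have V0: "V j 0 = V0 j" for j by (intro ext) (simp add: V_def xV0)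
    have Ud: "((\<lambda>s. U j s a1 a2) has_vector_derivative
        ulin \<kappa>1 \<kappa>2 B (\<lambda>k. T k t) (\<lambda>k. U k t) j a1 a2) (at t within {0..})" if t: "0 \<le> t" for j t a1 a2
    proof -
      have "ulin \<kappa>1 \<kappa>2 B (\<lambda>k. T k t) (\<lambda>k. U k t) j a1 a2 = (\<Sum>p\<in>UNIV. mU t (j, a1, a2) p * xU t p)"
        unfolding ulin_mat mU_def Tm_eq[OF t] U_def by (intro sum.cong refl) (auto split: prod.split)
      then show ?thesis using xUd t by (simp add: U_def)
    qed
    have Vd: "((\<lambda>s. V j s a1 a2) has_vector_derivative
        vlin \<kappa>1 \<kappa>2 C (\<lambda>k. T k t) (\<lambda>k. V k t) j a1 a2) (at t within {0..})" if t: "0 \<le> t" for j t a1 a2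
    proof -
      have "vlin \<kappa>1 \<kappa>2 C (\<lambda>k. T k t) (\<lambda>k. V k t) j a1 a2 = (\<Sum>p\<in>UNIV. mV t (j, a1, a2) p * xV t p)"
        unfolding vlin_mat mV_def Tm_eq[OF t] V_def by (intro sum.cong refl) (auto split: prod.split)
      then show ?thesis using xVd t by (simp add: V_def)
    qed
    define S where "S j s = tprod (U j s) (V j s)" for j s
    have Sd: "((\<lambda>s. S j s a1 a2 a3 a4) has_vector_derivative
        lohe_lin (dmm_kappa \<kappa>1 \<kappa>2) (dmm_A B C) (\<lambda>k. T k t) (\<lambda>k. S k t) j a1 a2 a3 a4) (at t within {0..})"
      if t: "0 \<le> t" for j t a1 a2 a3 a4
    proof -
      have d: "((\<lambda>s. U j s a1 a2 * V j s a3 a4) has_vector_derivative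
          U j t a1 a2 * vlin \<kappa>1 \<kappa>2 C (\<lambda>k. T k t) (\<lambda>k. V k t) j a3 a4
          + ulin \<kappa>1 \<kappa>2 B (\<lambda>k. T k t) (\<lambda>k. U k t) j a1 a2 * V j t a3 a4) (at t within {0..})"
        by (rule has_vector_derivative_mult[OF Ud[OF t] Vd[OF t]])
      have e: "lohe_lin (dmm_kappa \<kappa>1 \<kappa>2) (dmm_A B C) (\<lambda>k. T k t) (\<lambda>k. S k t) j a1 a2 a3 a4
          = U j t a1 a2 * vlin \<kappa>1 \<kappa>2 C (\<lambda>k. T k t) (\<lambda>k. V k t) j a3 a4
          + ulin \<kappa>1 \<kappa>2 B (\<lambda>k. T k t) (\<lambda>k. U k t) j a1 a2 * V j t a3 a4"
        unfolding S_def
        using lin_factor[where T="\<lambda>k. T k t" and U="\<lambda>k. U k t" and V="\<lambda>k. V k t" and B=B and C=C]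
        by (simp add: add.commute)
      show ?thesis unfolding e unfolding S_def tprod_def using d by simp
    qed
    define w where "w s = (\<lambda>(j, a1, a2, a3, a4). T j s a1 a2 a3 a4 - S j s a1 a2 a3 a4)" for s
    have w0: "w 0 i = 0" for i
      by (auto simp: w_def S_def T0 U0 V0 split: prod.split)
    have wd: "((\<lambda>s. w s i) has_vector_derivative (\<Sum>p\<in>UNIV. mL t i p * w t p)) (at t within {0..})"
      if t: "0 \<le> t" for t i
    proof -
      obtain j a1 a2 a3 a4 where i: "i = (j, a1, a2, a3, a4)" by (cases i) auto
      have "((\<lambda>s. T j s a1 a2 a3 a4 - S j s a1 a2 a3 a4) has_vector_derivative
          lohe_rhs (dmm_kappa \<kappa>1 \<kappa>2) (dmm_A B C) (\<lambda>k. T k t) j a1 a2 a3 a4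
          - lohe_lin (dmm_kappa \<kappa>1 \<kappa>2) (dmm_A B C) (\<lambda>k. T k t) (\<lambda>k. S k t) j a1 a2 a3 a4) (at t within {0..})"
        by (rule has_vector_derivative_diff[OF Td[OF t] Sd[OF t]])
      moreover have "lohe_rhs (dmm_kappa \<kappa>1 \<kappa>2) (dmm_A B C) (\<lambda>k. T k t) j a1 a2 a3 a4
          - lohe_lin (dmm_kappa \<kappa>1 \<kappa>2) (dmm_A B C) (\<lambda>k. T k t) (\<lambda>k. S k t) j a1 a2 a3 a4
          = (\<Sum>p\<in>UNIV. mL t i p * w t p)"
        unfolding lohe_rhs_lin lohe_lin_mat mL_def Tm_eq[OF t] i w_def
        by (subst sum_subtractf[symmetric], intro sum.cong refl) (auto simp: right_diff_distrib split: prod.split)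
      ultimately show ?thesis by (simp add: i w_def)
    qed
    have TS: "T j t = tprod (U j t) (V j t)" if t: "0 \<le> t" for j t
    proof (intro ext)
      fix a1 a2 a3 a4
      have "w t (j, a1, a2, a3, a4) = 0"
        by (rule lin_ode_unique[of mL w t, OF cmL w0 wd t]) simp
      then show "T j t a1 a2 a3 a4 = tprod (U j t) (V j t) a1 a2 a3 a4" by (simp add: w_def S_def)
    qed
    have Tt: "(\<lambda>k. T k t) = (\<lambda>k. tprod (U k t) (V k t))" if "0 \<le> t" for t
      using TS[OF that] by simp
    have Ud': "((\<lambda>s. U j s a1 a2) has_vector_derivative
        dmm_rhs \<kappa>1 \<kappa>2 B (\<lambda>k. U k t) (\<lambda>k. V k t) j a1 a2) (at t within {0..})" if t: "0 \<le> t" for j t a1 a2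
      using Ud[OF t, of j a1 a2] unfolding Tt[OF t] ulin_prod .
    have Vd': "((\<lambda>s. V j s a1 a2) has_vector_derivative
        dmm_rhs \<kappa>1 \<kappa>2 C (\<lambda>k. V k t) (\<lambda>k. U k t) j a1 a2) (at t within {0..})" if t: "0 \<le> t" for j t a1 a2
      using Vd[OF t, of j a1 a2] unfolding Tt[OF t] vlin_prod .
    have dmm: "is_dmm_solution \<kappa>1 \<kappa>2 B C U V"
      unfolding is_dmm_solution_def using Ud' Vd' by blast
    have nrmU: "Re (frob (U j t) (dmm_rhs \<kappa>1 \<kappa>2 B (\<lambda>k. U k t) (\<lambda>k. V k t) j)) = 0" for j t
      using dmm_rhs_norm[OF assms(3), where U="\<lambda>k. U k t" and V="\<lambda>k. V k t" and j=j] by simp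
    have nrmV: "Re (frob (V j t) (dmm_rhs \<kappa>1 \<kappa>2 C (\<lambda>k. V k t) (\<lambda>k. U k t) j)) = 0" for j t
      using dmm_rhs_norm[OF assms(4), where U="\<lambda>k. V k t" and V="\<lambda>k. U k t" and j=j] by simp
    have nU: "frob_norm (U j t) = 1" if t: "0 \<le> t" for j t
    proof -
      have "Re (frob (U j t) (U j t)) = Re (frob (U j 0) (U j 0))"
        by (rule frob_const[where D="\<lambda>t. dmm_rhs \<kappa>1 \<kappa>2 B (\<lambda>k. U k t) (\<lambda>k. V k t) j"])
          (simp_all add: Ud' nrmU t)
      then show ?thesis using N0(1)[of j] by (simp add: frob_norm_def U0)
    qed
    have nV: "frob_norm (V j t) = 1" if t: "0 \<le> t" for j t
    proof -
      have "Re (frob (V j t) (V j t)) = Re (frob (V j 0) (V j 0))"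
        by (rule frob_const[where D="\<lambda>t. dmm_rhs \<kappa>1 \<kappa>2 C (\<lambda>k. V k t) (\<lambda>k. U k t) j"])
          (simp_all add: Vd' nrmV t)
      then show ?thesis using N0(2)[of j] by (simp add: frob_norm_def V0)
    qed
    show "\<exists>U V. is_dmm_solution \<kappa>1 \<kappa>2 B C U V
                  \<and> (\<forall>j. U j 0 = U0 j \<and> V j 0 = V0 j)
                  \<and> (\<forall>j t. t > 0 \<longrightarrow> frob_norm (U j t) = 1 \<and> frob_norm (V j t) = 1
                                      \<and> T j t = tprod (U j t) (V j t))"
      using dmm U0 V0 nU nV TS by (intro exI[of _ U] exI[of _ V]) auto
  qed
  show ?thesis using part1 part2 by blast
qed

end
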